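(* Let $P,F,A_I,A_O,B_I,B_O$ be finite-dimensional Hilbert spaces with $A_I\cong A_O$, $B_I\cong B_O$, $P\cong F$ (identified via their computational bases), and let $|w\rangle\in P\otimes A_I\otimes A_O\otimes B_I\otimes B_O\otimes F$ be such that $|w\rangle\langle w|$ is a pure process. Define $$|w_r\rangle:=(\mathrm{SWAP}_{PF}\otimes\mathrm{SWAP}_{A_IA_O}\otimes\mathrm{SWAP}_{B_IB_O})\,|w^*\rangle,$$ where $|w^*\rangle$ is the entrywise complex conjugate of $|w\rangle$ in the computational basis and $\mathrm{SWAP}_{XY}$ exchanges the isomorphic factors $X$ and $Y$. Then $|w_r\rangle\langle w_r|$ is a valid pure process.
   Context: All Hilbert spaces are finite-dimensional with fixed computational bases; juxtaposition denotes tensor product. For a linear map $K:X\to Y$, $|K\rangle\!\rangle^{XY}=\sum_i|i\rangle^X\otimes(K|i\rangle)^Y$. For an operator $W$ on $X\otimes Y$, $W^{T_X}$ is its partial transpose on $X$. The Choi operator of $\mathcal{M}:\mathcal{L}(X)\to\mathcal{L}(Y)$ is $\sum_{ij}|i\rangle\langle j|\otimes\mathcal{M}(|i\rangle\langle j|)$. A process matrix is an operator $W$ on $PFA_IA_OB_IB_O$ such that for all finite-dimensional ancilla spaces $A_I',A_O',B_I',B_O'$ and all CPTP maps $\mathcal{M}_x:\mathcal{L}(A_IA_I')\to\mathcal{L}(A_OA_O')$, $\mathcal{M}_y:\mathcal{L}(B_IB_I')\to\mathcal{L}(B_OB_O')$ with Choi operators $M_x,M_y$, the operator $\mathrm{tr}_{A_IA_OB_IB_O}\big(W^{T_{A_IA_OB_IB_O}}(M_x\otimes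 M_y)\big)$ is the Choi operator of a CPTP map from $PA_I'B_I'$ to $FA_O'B_O'$. It is pure if for all ancilla spaces with $d_{A_I}d_{A_I'}=d_{A_O}d_{A_O'}$, $d_{B_I}d_{B_I'}=d_{B_O}d_{B_O'}$, $d_Pd_{A_I'}d_{B_I'}=d_Fd_{A_O'}d_{B_O'}$ and all unitaries $U:A_IA_I'\to A_OA_O'$, $V:B_IB_I'\to B_OB_O'$, the operator $\mathrm{tr}_{A_IA_OB_IB_O}\big(W^{T_{A_IA_OB_IB_O}}(|U\rangle\!\rangle\langle\!\langle U|\otimes|V\rangle\!\rangle\langle\!\langle V|)\big)$ is the Choi operator of a unitary channel from $PA_I'B_I'$ to $FA_O'B_O'$. *)

theory Defs
  imports Complex_Main
begin

text \<open>A computational basis vector of a composite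
system with label set S is a function from labels to indices which is supported on S
and bounded by the dimension of each label. Operators are matrices indexed by such
basis labels; tensor ordering is irrelevant in this representation.\<close>

datatype party = P | F | AI | AO | BI | BO | AI' | AO' | BI' | BO' | Ref

type_synonym bidx = "party \<Rightarrow> nat"
type_synonym vec = "bidx \<Rightarrow> complex"
type_synonym op = "bidx \<Rightarrow> bidx \<Rightarrow> complex"
type_synonym dims = "party \<Rightarrow> nat"

definition basis :: "dims \<Rightarrow> party set \<Rightarrow> bidx set" where
  "basis d S = {x. \<forall>l. (l \<in> S \<longrightarrow> x l < d l) \<and> (l \<notin> S \<longrightarrow> x l = 0)}"

definition restr :: "party set \<Rightarrow> bidx \<Rightarrow> bidx" where
  "restr S x = (\<lambda>l. if l \<in> S then x l else 0)"

definition join :: "party set \<Rightarrow> bidx \<Rightarrow> bidx \<Rightarrow> bidx" where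
  "join S x y = (\<lambda>l. if l \<in> S then x l else y l)"

definition op_eq :: "dims \<Rightarrow> party set \<Rightarrow> op \<Rightarrow> op \<Rightarrow> bool" where
  "op_eq d S A B \<longleftrightarrow> (\<forall>x\<in>basis d S. \<forall>y\<in>basis d S. A x y = B x y)"

definition id_op :: op where
  "id_op x y = (if x = y then 1 else 0)"

definition op_mult :: "dims \<Rightarrow> party set \<Rightarrow> op \<Rightarrow> op \<Rightarrow> op" where
  "op_mult d S A B = (\<lambda>x y. \<Sum>z\<in>basis d S. A x z * B z y)"

definition trace :: "dims \<Rightarrow> party set \<Rightarrow> op \<Rightarrow> complex" where
  "trace d S A = (\<Sum>x\<in>basis d S. A x x)"

text \<open>partial trace over T of an operator on S \<union> T (S, T disjoint); result lives on S\<close>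
definition ptrace :: "dims \<Rightarrow> party set \<Rightarrow> party set \<Rightarrow> op \<Rightarrow> op" where
  "ptrace d S T A = (\<lambda>x y. \<Sum>z\<in>basis d T. A (join S x z) (join S y z))"

definition ptranspose :: "party set \<Rightarrow> op \<Rightarrow> op" where
  "ptranspose T A = (\<lambda>x y. A (join T y x) (join T x y))"

text \<open>tensor product of A on S and B on T (S, T disjoint)\<close>
definition tensor :: "party set \<Rightarrow> party set \<Rightarrow> op \<Rightarrow> op \<Rightarrow> op" where
  "tensor S T A B = (\<lambda>x y. A (restr S x) (restr S y) * B (restr T x) (restr T y))"

definition embed :: "party set \<Rightarrow> party set \<Rightarrow> op \<Rightarrow> op" where
  "embed S T A = tensor S (T - S) A id_op"

definition psd :: "dims \<Rightarrow> party set \<Rightarrow> op \<Rightarrow> bool" where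
  "psd d S A \<longleftrightarrow> (\<forall>v::vec.
     Im (\<Sum>x\<in>basis d S. \<Sum>y\<in>basis d S. cnj (v x) * A x y * v y) = 0 \<and>
     0 \<le> Re (\<Sum>x\<in>basis d S. \<Sum>y\<in>basis d S. cnj (v x) * A x y * v y))"

text \<open>Maps L(X) \<rightarrow> L(Y) are functions on operators; they must only depend on the
input restricted to X and be linear.\<close>
definition is_linear_map :: "dims \<Rightarrow> party set \<Rightarrow> party set \<Rightarrow> (op \<Rightarrow> op) \<Rightarrow> bool" where
  "is_linear_map d X Y \<Phi> \<longleftrightarrow>
     (\<forall>A B. op_eq d X A B \<longrightarrow> op_eq d Y (\<Phi> A) (\<Phi> B)) \<and>
     (\<forall>(c::complex) A B. op_eq d Y (\<Phi> (\<lambda>x y. c * A x y + B x y)) (\<lambda>x y. c * \<Phi> A x y + \<Phi> B x y))"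

text \<open>id_Ref \<otimes> \<Phi> applied to an operator on X \<union> {Ref}\<close>
definition ampl :: "(op \<Rightarrow> op) \<Rightarrow> op \<Rightarrow> op" where
  "ampl \<Phi> \<rho> = (\<lambda>x y. \<Phi> (\<lambda>a b. \<rho> (join {Ref} x a) (join {Ref} y b)) (restr (- {Ref}) x) (restr (- {Ref}) y))"

definition is_cp :: "dims \<Rightarrow> party set \<Rightarrow> party set \<Rightarrow> (op \<Rightarrow> op) \<Rightarrow> bool" where
  "is_cp d X Y \<Phi> \<longleftrightarrow> (\<forall>k\<ge>1. \<forall>\<rho>. psd (d(Ref := k)) (insert Ref X) \<rho> \<longrightarrow>
                                     psd (d(Ref := k)) (insert Ref Y) (ampl \<Phi> \<rho>))"

definition is_tp :: "dims \<Rightarrow> party set \<Rightarrow> party set \<Rightarrow> (op \<Rightarrow> op) \<Rightarrow> bool" where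
  "is_tp d X Y \<Phi> \<longleftrightarrow> (\<forall>\<rho>. trace d Y (\<Phi> \<rho>) = trace d X \<rho>)"

definition is_cptp :: "dims \<Rightarrow> party set \<Rightarrow> party set \<Rightarrow> (op \<Rightarrow> op) \<Rightarrow> bool" where
  "is_cptp d X Y \<Phi> \<longleftrightarrow> is_linear_map d X Y \<Phi> \<and> is_cp d X Y \<Phi> \<and> is_tp d X Y \<Phi>"

definition unit_op :: "bidx \<Rightarrow> bidx \<Rightarrow> op" where
  "unit_op a b = (\<lambda>u v. if u = a \<and> v = b then 1 else 0)"

text \<open>Choi operator \<Sum>ij |i><j| \<otimes> \<Phi>(|i><j|), an operator on X \<union> Y\<close>
definition choi :: "party set \<Rightarrow> party set \<Rightarrow> (op \<Rightarrow> op) \<Rightarrow> op" where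
  "choi X Y \<Phi> = (\<lambda>x y. \<Phi> (unit_op (restr X x) (restr X y)) (restr Y x) (restr Y y))"

definition is_cptp_choi :: "dims \<Rightarrow> party set \<Rightarrow> party set \<Rightarrow> op \<Rightarrow> bool" where
  "is_cptp_choi d X Y J \<longleftrightarrow> (\<exists>\<Phi>. is_cptp d X Y \<Phi> \<and> op_eq d (X \<union> Y) (choi X Y \<Phi>) J)"

text \<open>A linear map U : X \<rightarrow> Y is the matrix with entries U y x (y in Y, x in X).\<close>
definition is_unitary :: "dims \<Rightarrow> party set \<Rightarrow> party set \<Rightarrow> op \<Rightarrow> bool" where
  "is_unitary d X Y U \<longleftrightarrow>
     (\<forall>x\<in>basis d X. \<forall>x'\<in>basis d X. (\<Sum>y\<in>basis d Y. cnj (U y x) * U y x') = id_op x x') \<and>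
     (\<forall>y\<in>basis d Y. \<forall>y'\<in>basis d Y. (\<Sum>x\<in>basis d X. U y x * cnj (U y' x)) = id_op y y')"

definition uchan :: "dims \<Rightarrow> party set \<Rightarrow> op \<Rightarrow> op \<Rightarrow> op" where
  "uchan d X U \<rho> = (\<lambda>y y'. \<Sum>x\<in>basis d X. \<Sum>x'\<in>basis d X. U y x * \<rho> x x' * cnj (U y' x'))"

definition is_unitary_choi :: "dims \<Rightarrow> party set \<Rightarrow> party set \<Rightarrow> op \<Rightarrow> bool" where
  "is_unitary_choi d X Y J \<longleftrightarrow>
     (\<exists>U. is_unitary d X Y U \<and> op_eq d (X \<union> Y) (choi X Y (uchan d X U)) J)"

text \<open>|U>> = \<Sum>i |i> \<otimes> U|i>, a vector on X \<union> Y\<close>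
definition dket :: "party set \<Rightarrow> party set \<Rightarrow> op \<Rightarrow> vec" where
  "dket X Y U = (\<lambda>z. U (restr Y z) (restr X z))"

definition proj :: "vec \<Rightarrow> op" where
  "proj v = (\<lambda>x y. v x * cnj (v y))"

definition mainS :: "party set" where "mainS = {P, F, AI, AO, BI, BO}"
definition allS :: "party set" where "allS = {P, F, AI, AO, BI, BO, AI', AO', BI', BO'}"

definition anc_dims :: "dims \<Rightarrow> nat \<Rightarrow> nat \<Rightarrow> nat \<Rightarrow> nat \<Rightarrow> dims" where
  "anc_dims d a1 a2 b1 b2 = d(AI' := a1, AO' := a2, BI' := b1, BO' := b2)"

text \<open>tr_{AI AO BI BO}( W^{T_{AI AO BI BO}} (Mx \<otimes> My) ), an operator on P F AI' AO' BI' BO'\<close>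
definition link_out :: "dims \<Rightarrow> op \<Rightarrow> op \<Rightarrow> op \<Rightarrow> op" where
  "link_out d W Mx My =
     ptrace d {P, F, AI', AO', BI', BO'} {AI, AO, BI, BO}
       (op_mult d allS
          (embed mainS allS (ptranspose {AI, AO, BI, BO} W))
          (embed {AI, AI', AO, AO', BI, BI', BO, BO'} allS
             (tensor {AI, AI', AO, AO'} {BI, BI', BO, BO'} Mx My)))"

definition is_process_matrix :: "dims \<Rightarrow> op \<Rightarrow> bool" where
  "is_process_matrix d W \<longleftrightarrow>
     (\<forall>a1 a2 b1 b2. 1 \<le> a1 \<and> 1 \<le> a2 \<and> 1 \<le> b1 \<and> 1 \<le> b2 \<longrightarrow>
       (\<forall>\<Phi>x \<Phi>y.
          is_cptp (anc_dims d a1 a2 b1 b2) {AI, AI'} {AO, AO'} \<Phi>x \<and>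
          is_cptp (anc_dims d a1 a2 b1 b2) {BI, BI'} {BO, BO'} \<Phi>y \<longrightarrow>
          is_cptp_choi (anc_dims d a1 a2 b1 b2) {P, AI', BI'} {F, AO', BO'}
            (link_out (anc_dims d a1 a2 b1 b2) W
               (choi {AI, AI'} {AO, AO'} \<Phi>x) (choi {BI, BI'} {BO, BO'} \<Phi>y))))"

definition is_pure :: "dims \<Rightarrow> op \<Rightarrow> bool" where
  "is_pure d W \<longleftrightarrow>
     (\<forall>a1 a2 b1 b2. 1 \<le> a1 \<and> 1 \<le> a2 \<and> 1 \<le> b1 \<and> 1 \<le> b2 \<and>
        d AI * a1 = d AO * a2 \<and> d BI * b1 = d BO * b2 \<and> d P * a1 * b1 = d F * a2 * b2 \<longrightarrow>
       (\<forall>U V.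
          is_unitary (anc_dims d a1 a2 b1 b2) {AI, AI'} {AO, AO'} U \<and>
          is_unitary (anc_dims d a1 a2 b1 b2) {BI, BI'} {BO, BO'} V \<longrightarrow>
          is_unitary_choi (anc_dims d a1 a2 b1 b2) {P, AI', BI'} {F, AO', BO'}
            (link_out (anc_dims d a1 a2 b1 b2) W
               (proj (dket {AI, AI'} {AO, AO'} U)) (proj (dket {BI, BI'} {BO, BO'} V)))))"

definition is_pure_process :: "dims \<Rightarrow> op \<Rightarrow> bool" where
  "is_pure_process d W \<longleftrightarrow> is_process_matrix d W \<and> is_pure d W"

definition swap_idx :: "bidx \<Rightarrow> bidx" where
  "swap_idx x = x(P := x F, F := x P, AI := x AO, AO := x AI, BI := x BO, BO := x BI)"

definition w_rev :: "vec \<Rightarrow> vec" where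
  "w_rev w = (\<lambda>x. cnj (w (swap_idx x)))"

end

theory Submission
  imports Defs "HOL-Library.FuncSet"
begin

lemma party_UNIV: "(UNIV :: party set) = {P, F, AI, AO, BI, BO, AI', AO', BI', BO', Ref}"
  by (rule set_eqI, case_tac x, auto)

lemma finite_party_set[simp]: "finite (S :: party set)"
proof -
  have "finite (UNIV :: party set)" by (simp add: party_UNIV)
  then show ?thesis by (rule finite_subset[OF subset_UNIV])
qed

lemma finite_basis[simp]: "finite (basis d S)"
proof -
  have "basis d S \<subseteq> PiE UNIV (\<lambda>l. {..< Suc (d l)})"
  proof
    fix x assume "x \<in> basis d S"
    then have "x l < Suc (d l)" for l by (cases "l \<in> S") (auto simp: basis_def)
    then show "x \<in> PiE UNIV (\<lambda>l. {..< Suc (d l)})" by (auto simp: PiE_def extensional_def)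
  qed
  moreover have "finite (PiE UNIV (\<lambda>l. {..< Suc (d l)}))"
    by (rule finite_PiE) auto
  ultimately show ?thesis by (rule finite_subset)
qed

lemma join_in_basis:
  assumes "x \<in> basis d S" "y \<in> basis d T" "S \<inter> T = {}"
  shows "join S x y \<in> basis d (S \<union> T)"
  using assms by (auto simp: basis_def join_def)

lemma basis_union_split:
  assumes "S \<inter> T = {}"
  shows "(\<Sum>u\<in>basis d (S \<union> T). f u) = (\<Sum>x\<in>basis d S. \<Sum>y\<in>basis d T. f (join S x y))"
proof -
  have bij: "bij_betw (\<lambda>(x,y). join S x y) (basis d S \<times> basis d T) (basis d (S \<union> T))"
  proof (rule bij_betwI[where g = "\<lambda>u. (restr S u, restr T u)"])
    show "(\<lambda>(x,y). join S x y) \<in> basis d S \<times> basis d T \<rightarrow> basis d (S \<union> T)"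
      using assms by (auto simp: basis_def join_def)
    show "(\<lambda>u. (restr S u, restr T u)) \<in> basis d (S \<union> T) \<rightarrow> basis d S \<times> basis d T"
      by (auto simp: basis_def restr_def)
    show "\<And>x. x \<in> basis d S \<times> basis d T \<Longrightarrow> (restr S (case x of (x, y) \<Rightarrow> join S x y), restr T (case x of (x, y) \<Rightarrow> join S x y)) = x"
      using assms by (auto simp: basis_def restr_def join_def fun_eq_iff)
    show "\<And>y. y \<in> basis d (S \<union> T) \<Longrightarrow> (case (restr S y, restr T y) of (x, y) \<Rightarrow> join S x y) = y"
      by (auto simp: basis_def restr_def join_def fun_eq_iff)
  qed
  have "(\<Sum>u\<in>basis d (S \<union> T). f u) = (\<Sum>p\<in>basis d S \<times> basis d T. f (case p of (x,y) \<Rightarrow> join S x y))"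
    using sum.reindex_bij_betw[OF bij, of f] by simp
  also have "\<dots> = (\<Sum>x\<in>basis d S. \<Sum>y\<in>basis d T. f (join S x y))"
    by (simp add: sum.cartesian_product prod.case_distrib)
  finally show ?thesis .
qed

lemma party_fun_eq_iff: "(f = g) \<longleftrightarrow> (f P = g P \<and> f F = g F \<and> f AI = g AI \<and> f AO = g AO \<and> f BI = g BI \<and> f BO = g BO
   \<and> f AI' = g AI' \<and> f AO' = g AO' \<and> f BI' = g BI' \<and> f BO' = g BO' \<and> f Ref = g Ref)"
  by (auto simp: fun_eq_iff, case_tac x, auto)

lemma basis_zero: "x \<in> basis d S \<Longrightarrow> l \<notin> S \<Longrightarrow> x l = 0"
  by (auto simp: basis_def)

lemma basis_lt: "x \<in> basis d S \<Longrightarrow> l \<in> S \<Longrightarrow> x l < d l"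
  by (auto simp: basis_def)

lemma basis_iff: "x \<in> basis d S \<longleftrightarrow> (\<forall>l. (l \<in> S \<longrightarrow> x l < d l) \<and> (l \<notin> S \<longrightarrow> x l = 0))"
  by (simp add: basis_def)

lemma restr_in_basis: "x \<in> basis d T \<Longrightarrow> S \<subseteq> T \<Longrightarrow> restr S x \<in> basis d S"
  by (auto simp: basis_def restr_def)

lemma restr_basis_id: "x \<in> basis d S \<Longrightarrow> restr S x = x"
  by (auto simp: basis_def restr_def fun_eq_iff)

lemma sum_delta_basis:
  assumes "a \<in> basis d S"
  shows "(\<Sum>u\<in>basis d S. (if u = a then 1 else 0) * f u) = (f a :: complex)"
proof -
  have "(\<Sum>u\<in>basis d S. (if u = a then 1 else 0) * f u) = (\<Sum>u\<in>basis d S. if u = a then f a else 0)"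
    by (rule sum.cong) auto
  then show ?thesis using assms by simp
qed

lemma basis_fun_upd_split:
  assumes "L \<in> S"
  shows "(\<Sum>q\<in>basis d S. f q) = (\<Sum>q\<in>basis d (S - {L}). \<Sum>j<d L. f (q(L := j)))"
proof -
  have bij: "bij_betw (\<lambda>(q,j). q(L := j)) (basis d (S - {L}) \<times> {..<d L}) (basis d S)"
  proof (rule bij_betwI[where g = "\<lambda>u. (u(L := 0), u L)"])
    show "(\<lambda>(q,j). q(L := j)) \<in> basis d (S - {L}) \<times> {..<d L} \<rightarrow> basis d S"
      using assms by (auto simp: basis_def)
    show "(\<lambda>u. (u(L := 0), u L)) \<in> basis d S \<rightarrow> basis d (S - {L}) \<times> {..<d L}"
      using assms by (auto simp: basis_def)
    show "\<And>x. x \<in> basis d (S - {L}) \<times> {..<d L} \<Longrightarrow> ((case x of (q, j) \<Rightarrow> q(L := j))(L := 0), (case x of (q, j) \<Rightarrow> q(L := j)) L) = x"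
      by (auto simp: basis_def fun_eq_iff)
    show "\<And>y. y \<in> basis d S \<Longrightarrow> (case (y(L := 0), y L) of (q, j) \<Rightarrow> q(L := j)) = y"
      by auto
  qed
  have "(\<Sum>u\<in>basis d S. f u) = (\<Sum>p\<in>basis d (S - {L}) \<times> {..<d L}. f (case p of (q,j) \<Rightarrow> q(L := j)))"
    using sum.reindex_bij_betw[OF bij, of f] by simp
  also have "\<dots> = (\<Sum>q\<in>basis d (S - {L}). \<Sum>j<d L. f (q(L := j)))"
    by (simp add: sum.cartesian_product prod.case_distrib)
  finally show ?thesis .
qed

lemma sum_mult_blocks: "(\<Sum>j<(a::nat) * r. g j) = (\<Sum>k<r. \<Sum>q<a. g (q + a * k)::complex)"
proof (induction r)
  case 0 then show ?case by simp
next
  case (Suc r)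
  have "(\<Sum>j<a * Suc r. g j) = (\<Sum>j<a * r. g j) + (\<Sum>q<a. g (q + a * r))"
  proof -
    have "{..<a * Suc r} = {..<a * r} \<union> {a*r..<a*r + a}" by auto
    moreover have "(\<Sum>j\<in>{a*r..<a*r + a}. g j) = (\<Sum>q<a. g (q + a * r))"
      by (rule sum.reindex_bij_witness[of _ "\<lambda>q. q + a * r" "\<lambda>j. j - a * r"]) auto
    ultimately show ?thesis by (simp add: sum.union_disjoint ivl_disj_int)
  qed
  then show ?case using Suc by simp
qed

lemma allS_minus_mainS: "allS - mainS = {AI', AO', BI', BO'}"
  by (auto simp: allS_def mainS_def)
lemma allS_minus_Q: "allS - {AI, AI', AO, AO', BI, BI', BO, BO'} = {P, F}"
  by (auto simp: allS_def)
lemma allS_split: "allS = {AI, AO, BI, BO} \<union> {P, F, AI', AO', BI', BO'}"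
  by (auto simp: allS_def)

lemma link_out_formula:
  assumes s: "s \<in> basis d {P, F, AI', AO', BI', BO'}" and t: "t \<in> basis d {P, F, AI', AO', BI', BO'}"
  shows "link_out d W Mx My s t =
    (\<Sum>z\<in>basis d {AI, AO, BI, BO}. \<Sum>z'\<in>basis d {AI, AO, BI, BO}.
       W (restr mainS (join {AI, AO, BI, BO} z' s)) (restr mainS (join {AI, AO, BI, BO} z t)) *
       Mx (restr {AI, AI', AO, AO'} (join {AI, AO, BI, BO} z' s)) (restr {AI, AI', AO, AO'} (join {AI, AO, BI, BO} z t)) *
       My (restr {BI, BI', BO, BO'} (join {AI, AO, BI, BO} z' s)) (restr {BI, BI', BO, BO'} (join {AI, AO, BI, BO} z t)))"
proof -
  define Z where "Z = {AI, AO, BI, BO}"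
  define Os where "Os = {P, F, AI', AO', BI', BO'}"
  define r0 where "r0 = join {P, F} t s"
  have r0: "r0 \<in> basis d Os" using s t by (auto simp: r0_def Os_def basis_def join_def)
  have inner: "(\<Sum>u\<in>basis d allS.
         embed mainS allS (ptranspose {AI, AO, BI, BO} W) (join Os s z) u *
         embed {AI, AI', AO, AO', BI, BI', BO, BO'} allS (tensor {AI, AI', AO, AO'} {BI, BI', BO, BO'} Mx My) u (join Os t z))
     = (\<Sum>z'\<in>basis d Z.
       W (restr mainS (join Z z' s)) (restr mainS (join Z z t)) *
       Mx (restr {AI, AI', AO, AO'} (join Z z' s)) (restr {AI, AI', AO, AO'} (join Z z t)) *
       My (restr {BI, BI', BO, BO'} (join Z z' s)) (restr {BI, BI', BO, BO'} (join Z z t)))"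
    if z: "z \<in> basis d Z" for z
  proof -
    have "(\<Sum>u\<in>basis d allS.
         embed mainS allS (ptranspose {AI, AO, BI, BO} W) (join Os s z) u *
         embed {AI, AI', AO, AO', BI, BI', BO, BO'} allS (tensor {AI, AI', AO, AO'} {BI, BI', BO, BO'} Mx My) u (join Os t z))
      = (\<Sum>z'\<in>basis d Z. \<Sum>r\<in>basis d Os.
         embed mainS allS (ptranspose {AI, AO, BI, BO} W) (join Os s z) (join Z z' r) *
         embed {AI, AI', AO, AO', BI, BI', BO, BO'} allS (tensor {AI, AI', AO, AO'} {BI, BI', BO, BO'} Mx My) (join Z z' r) (join Os t z))"
      unfolding allS_split Z_def Os_def by (rule basis_union_split) auto
    also have "\<dots> = (\<Sum>z'\<in>basis d Z. \<Sum>r\<in>basis d Os. (if r = r0 then 1 else 0) *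
       (W (restr mainS (join Z z' s)) (restr mainS (join Z z t)) *
       Mx (restr {AI, AI', AO, AO'} (join Z z' s)) (restr {AI, AI', AO, AO'} (join Z z t)) *
       My (restr {BI, BI', BO, BO'} (join Z z' s)) (restr {BI, BI', BO, BO'} (join Z z t))))"
    proof (intro sum.cong refl)
      fix z' r assume z': "z' \<in> basis d Z" and r: "r \<in> basis d Os"
      have idp: "id_op (restr {AI', AO', BI', BO'} (join Os s z)) (restr {AI', AO', BI', BO'} (join Z z' r)) *
                 id_op (restr {P, F} (join Z z' r)) (restr {P, F} (join Os t z)) = (if r = r0 then 1 else 0)"
        using r r0 unfolding id_op_def
        by (auto simp: party_fun_eq_iff restr_def join_def Z_def Os_def r0_def basis_iff)
      show "embed mainS allS (ptranspose {AI, AO, BI, BO} W) (join Os s z) (join Z z' r) *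
         embed {AI, AI', AO, AO', BI, BI', BO, BO'} allS (tensor {AI, AI', AO, AO'} {BI, BI', BO, BO'} Mx My) (join Z z' r) (join Os t z)
         = (if r = r0 then 1 else 0) *
       (W (restr mainS (join Z z' s)) (restr mainS (join Z z t)) *
       Mx (restr {AI, AI', AO, AO'} (join Z z' s)) (restr {AI, AI', AO, AO'} (join Z z t)) *
       My (restr {BI, BI', BO, BO'} (join Z z' s)) (restr {BI, BI', BO, BO'} (join Z z t)))"
      proof (cases "r = r0")
        case False
        then show ?thesis using idp unfolding embed_def tensor_def allS_minus_mainS allS_minus_Q
          by (auto simp: algebra_simps)
      next
        case True
        have e1: "join {AI, AO, BI, BO} (restr mainS (join Z z' r0)) (restr mainS (join Os s z)) = restr mainS (join Z z' s)"
          using z z' s t by (auto simp: party_fun_eq_iff restr_def join_def Z_def Os_def r0_def basis_iff mainS_def)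
        have e2: "join {AI, AO, BI, BO} (restr mainS (join Os s z)) (restr mainS (join Z z' r0)) = restr mainS (join Z z t)"
          using z z' s t by (auto simp: party_fun_eq_iff restr_def join_def Z_def Os_def r0_def basis_iff mainS_def)
        have e3: "restr {AI, AI', AO, AO'} (restr {AI, AI', AO, AO', BI, BI', BO, BO'} (join Z z' r0)) = restr {AI, AI', AO, AO'} (join Z z' s)"
          by (auto simp: party_fun_eq_iff restr_def join_def Z_def Os_def r0_def)
        have e4: "restr {AI, AI', AO, AO'} (restr {AI, AI', AO, AO', BI, BI', BO, BO'} (join Os t z)) = restr {AI, AI', AO, AO'} (join Z z t)"
          using z t by (auto simp: party_fun_eq_iff restr_def join_def Z_def Os_def basis_iff)
        have e5: "restr {BI, BI', BO, BO'} (restr {AI, AI', AO, AO', BI, BI', BO, BO'} (join Z z' r0)) = restr {BI, BI', BO, BO'} (join Z z' s)"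
          by (auto simp: party_fun_eq_iff restr_def join_def Z_def Os_def r0_def)
        have e6: "restr {BI, BI', BO, BO'} (restr {AI, AI', AO, AO', BI, BI', BO, BO'} (join Os t z)) = restr {BI, BI', BO, BO'} (join Z z t)"
          using z t by (auto simp: party_fun_eq_iff restr_def join_def Z_def Os_def basis_iff)
        have id1: "id_op (restr {AI', AO', BI', BO'} (join Os s z)) (restr {AI', AO', BI', BO'} (join Z z' r0)) = 1"
          unfolding id_op_def by (auto simp: party_fun_eq_iff restr_def join_def Os_def r0_def Z_def)
        have id2: "id_op (restr {P, F} (join Z z' r0)) (restr {P, F} (join Os t z)) = 1"
          unfolding id_op_def by (auto simp: party_fun_eq_iff restr_def join_def Os_def r0_def Z_def)
        show ?thesis unfolding True embed_def tensor_def allS_minus_mainS allS_minus_Q ptranspose_def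
          by (simp only: e1 e2 e3 e4 e5 e6 id1 id2) simp
      qed
    qed
    also have "\<dots> = (\<Sum>z'\<in>basis d Z.
       W (restr mainS (join Z z' s)) (restr mainS (join Z z t)) *
       Mx (restr {AI, AI', AO, AO'} (join Z z' s)) (restr {AI, AI', AO, AO'} (join Z z t)) *
       My (restr {BI, BI', BO, BO'} (join Z z' s)) (restr {BI, BI', BO, BO'} (join Z z t)))"
      by (intro sum.cong refl) (rule sum_delta_basis[OF r0])
    finally show ?thesis .
  qed
  show ?thesis
    unfolding link_out_def ptrace_def op_mult_def
    using inner by (simp add: Z_def Os_def)
qed

definition contr :: "dims \<Rightarrow> vec \<Rightarrow> vec \<Rightarrow> vec \<Rightarrow> vec" where
  "contr d w m n s = (\<Sum>z\<in>basis d {AI, AO, BI, BO}.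
     w (restr mainS (join {AI, AO, BI, BO} z s)) * m (restr {AI, AI', AO, AO'} (join {AI, AO, BI, BO} z s)) *
     n (restr {BI, BI', BO, BO'} (join {AI, AO, BI, BO} z s)))"

lemma sum_swap4:
  "(\<Sum>a\<in>A. \<Sum>b\<in>B. \<Sum>c\<in>C. \<Sum>e\<in>E. f a b c e) = (\<Sum>c\<in>C. \<Sum>e\<in>E. \<Sum>a\<in>A. \<Sum>b\<in>B. (f a b c e :: 'z :: comm_monoid_add))"
proof -
  have "(\<Sum>a\<in>A. \<Sum>b\<in>B. \<Sum>c\<in>C. \<Sum>e\<in>E. f a b c e) = (\<Sum>a\<in>A. \<Sum>c\<in>C. \<Sum>b\<in>B. \<Sum>e\<in>E. f a b c e)"
    by (rule sum.cong[OF refl]) (rule sum.swap)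
  also have "\<dots> = (\<Sum>c\<in>C. \<Sum>a\<in>A. \<Sum>b\<in>B. \<Sum>e\<in>E. f a b c e)" by (rule sum.swap)
  also have "\<dots> = (\<Sum>c\<in>C. \<Sum>a\<in>A. \<Sum>e\<in>E. \<Sum>b\<in>B. f a b c e)"
    by (rule sum.cong[OF refl], rule sum.cong[OF refl]) (rule sum.swap)
  also have "\<dots> = (\<Sum>c\<in>C. \<Sum>e\<in>E. \<Sum>a\<in>A. \<Sum>b\<in>B. f a b c e)"
    by (rule sum.cong[OF refl]) (rule sum.swap)
  finally show ?thesis .
qed

lemma restrQ_in_basis:
  assumes "z \<in> basis d {AI, AO, BI, BO}" "s \<in> basis d {P, F, AI', AO', BI', BO'}"
  shows "restr {AI, AI', AO, AO'} (join {AI, AO, BI, BO} z s) \<in> basis d {AI, AI', AO, AO'}"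
    and "restr {BI, BI', BO, BO'} (join {AI, AO, BI, BO} z s) \<in> basis d {BI, BI', BO, BO'}"
  using assms by (auto simp: basis_iff restr_def join_def)

lemma link_out_kraus:
  assumes s: "s \<in> basis d {P, F, AI', AO', BI', BO'}" and t: "t \<in> basis d {P, F, AI', AO', BI', BO'}"
    and K: "finite K" and L: "finite L"
    and Mx: "\<forall>a\<in>basis d {AI, AI', AO, AO'}. \<forall>b\<in>basis d {AI, AI', AO, AO'}. Mx a b = (\<Sum>k\<in>K. m k a * cnj (m k b))"
    and My: "\<forall>a\<in>basis d {BI, BI', BO, BO'}. \<forall>b\<in>basis d {BI, BI', BO, BO'}. My a b = (\<Sum>l\<in>L. n l a * cnj (n l b))"
  shows "link_out d (proj w) Mx My s t = (\<Sum>k\<in>K. \<Sum>l\<in>L. contr d w (m k) (n l) s * cnj (contr d w (m k) (n l) t))"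
proof -
  define Z where "Z = {AI, AO, BI, BO}"
  have "link_out d (proj w) Mx My s t =
    (\<Sum>z\<in>basis d Z. \<Sum>z'\<in>basis d Z.
       proj w (restr mainS (join Z z' s)) (restr mainS (join Z z t)) *
       Mx (restr {AI, AI', AO, AO'} (join Z z' s)) (restr {AI, AI', AO, AO'} (join Z z t)) *
       My (restr {BI, BI', BO, BO'} (join Z z' s)) (restr {BI, BI', BO, BO'} (join Z z t)))"
    unfolding Z_def by (rule link_out_formula[OF s t])
  also have "\<dots> = (\<Sum>z\<in>basis d Z. \<Sum>z'\<in>basis d Z. \<Sum>k\<in>K. \<Sum>l\<in>L.
       (w (restr mainS (join Z z' s)) * m k (restr {AI, AI', AO, AO'} (join Z z' s)) * n l (restr {BI, BI', BO, BO'} (join Z z' s))) *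
       cnj (w (restr mainS (join Z z t)) * m k (restr {AI, AI', AO, AO'} (join Z z t)) * n l (restr {BI, BI', BO, BO'} (join Z z t))))"
  proof (intro sum.cong refl)
    fix z z' assume z: "z \<in> basis d Z" and z': "z' \<in> basis d Z"
    have "Mx (restr {AI, AI', AO, AO'} (join Z z' s)) (restr {AI, AI', AO, AO'} (join Z z t)) =
      (\<Sum>k\<in>K. m k (restr {AI, AI', AO, AO'} (join Z z' s)) * cnj (m k (restr {AI, AI', AO, AO'} (join Z z t))))"
      using Mx restrQ_in_basis(1)[OF z[unfolded Z_def] s] restrQ_in_basis(1)[OF z'[unfolded Z_def] s]
        restrQ_in_basis(1)[OF z[unfolded Z_def] t] unfolding Z_def by blast
    moreover have "My (restr {BI, BI', BO, BO'} (join Z z' s)) (restr {BI, BI', BO, BO'} (join Z z t)) =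
      (\<Sum>l\<in>L. n l (restr {BI, BI', BO, BO'} (join Z z' s)) * cnj (n l (restr {BI, BI', BO, BO'} (join Z z t))))"
      using My restrQ_in_basis(2)[OF z[unfolded Z_def] s] restrQ_in_basis(2)[OF z'[unfolded Z_def] s]
        restrQ_in_basis(2)[OF z[unfolded Z_def] t] unfolding Z_def by blast
    ultimately show "proj w (restr mainS (join Z z' s)) (restr mainS (join Z z t)) *
       Mx (restr {AI, AI', AO, AO'} (join Z z' s)) (restr {AI, AI', AO, AO'} (join Z z t)) *
       My (restr {BI, BI', BO, BO'} (join Z z' s)) (restr {BI, BI', BO, BO'} (join Z z t)) =
       (\<Sum>k\<in>K. \<Sum>l\<in>L.
       (w (restr mainS (join Z z' s)) * m k (restr {AI, AI', AO, AO'} (join Z z' s)) * n l (restr {BI, BI', BO, BO'} (join Z z' s))) *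
       cnj (w (restr mainS (join Z z t)) * m k (restr {AI, AI', AO, AO'} (join Z z t)) * n l (restr {BI, BI', BO, BO'} (join Z z t))))"
      by (simp add: proj_def sum_distrib_left sum_distrib_right algebra_simps)
  qed
  also have "\<dots> = (\<Sum>k\<in>K. \<Sum>l\<in>L. \<Sum>z\<in>basis d Z. \<Sum>z'\<in>basis d Z.
       (w (restr mainS (join Z z' s)) * m k (restr {AI, AI', AO, AO'} (join Z z' s)) * n l (restr {BI, BI', BO, BO'} (join Z z' s))) *
       cnj (w (restr mainS (join Z z t)) * m k (restr {AI, AI', AO, AO'} (join Z z t)) * n l (restr {BI, BI', BO, BO'} (join Z z t))))"
    by (rule sum_swap4)
  also have "\<dots> = (\<Sum>k\<in>K. \<Sum>l\<in>L. contr d w (m k) (n l) s * cnj (contr d w (m k) (n l) t))"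
    unfolding contr_def Z_def[symmetric] cnj_sum sum_product
    by (subst sum.swap) (simp add: mult.commute)
  finally show ?thesis .
qed

definition qf :: "bidx set \<Rightarrow> op \<Rightarrow> vec \<Rightarrow> complex" where
  "qf B A v = (\<Sum>x\<in>B. \<Sum>y\<in>B. cnj (v x) * A x y * v y)"

lemma psd_qf: "psd d S A \<longleftrightarrow> (\<forall>v. Im (qf (basis d S) A v) = 0 \<and> 0 \<le> Re (qf (basis d S) A v))"
  by (simp add: psd_def qf_def)

lemma basis_upd_notin: "l \<notin> S \<Longrightarrow> basis (d(l := k)) S = basis d S"
  by (auto simp: basis_def)

definition mkmap :: "dims \<Rightarrow> party set \<Rightarrow> op \<Rightarrow> op \<Rightarrow> op" where
  "mkmap d X J \<sigma> = (\<lambda>s t. \<Sum>x\<in>basis d X. \<Sum>y\<in>basis d X. \<sigma> x y * J (join X x s) (join X y t))"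

lemma mkmap_linear: "is_linear_map d X Y (mkmap d X J)"
  unfolding is_linear_map_def op_eq_def mkmap_def
  by (auto simp: sum_distrib_left sum.distrib algebra_simps intro!: sum.cong)

lemma mkmap_choi:
  assumes "X \<inter> Y = {}"
  shows "op_eq d (X \<union> Y) (choi X Y (mkmap d X J)) J"
  unfolding op_eq_def
proof (intro ballI)
  fix a b assume a: "a \<in> basis d (X \<union> Y)" and b: "b \<in> basis d (X \<union> Y)"
  have ra: "restr X a \<in> basis d X" and rb: "restr X b \<in> basis d X"
    using a b by (auto intro: restr_in_basis)
  have ja: "join X (restr X a) (restr Y a) = a" and jb: "join X (restr X b) (restr Y b) = b"
    using a b assms by (auto simp: fun_eq_iff join_def restr_def basis_def)
  have "choi X Y (mkmap d X J) a b = (\<Sum>x\<in>basis d X. \<Sum>y\<in>basis d X.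
     (if x = restr X a then 1 else 0) * ((if y = restr X b then 1 else 0) * J (join X x (restr Y a)) (join X y (restr Y b))))"
    unfolding choi_def mkmap_def unit_op_def by (intro sum.cong refl) auto
  also have "\<dots> = J (join X (restr X a) (restr Y a)) (join X (restr X b) (restr Y b))"
    by (simp add: sum_delta_basis[OF ra] sum_distrib_left[symmetric] sum_delta_basis[OF rb])
  finally show "choi X Y (mkmap d X J) a b = J a b" using ja jb by simp
qed

lemma mkmap_tp:
  assumes tp: "\<forall>x\<in>basis d X. \<forall>y\<in>basis d X. (\<Sum>s\<in>basis d Y. J (join X x s) (join X y s)) = id_op x y"
  shows "is_tp d X Y (mkmap d X J)"
  unfolding is_tp_def
proof
  fix \<sigma>
  have "trace d Y (mkmap d X J \<sigma>) = (\<Sum>x\<in>basis d X. \<Sum>y\<in>basis d X. \<sigma> x y * (\<Sum>s\<in>basis d Y. J (join X x s) (join X y s)))"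
    unfolding trace_def mkmap_def
    by (subst sum.swap) (simp add: sum_distrib_left sum.swap[where B = "basis d Y"])
  also have "\<dots> = (\<Sum>x\<in>basis d X. \<Sum>y\<in>basis d X. \<sigma> x y * id_op x y)"
    using tp by (intro sum.cong refl) auto
  also have "\<dots> = trace d X \<sigma>"
    unfolding trace_def id_op_def by (simp add: if_distrib sum.delta cong: if_cong)
  finally show "trace d Y (mkmap d X J \<sigma>) = trace d X \<sigma>" .
qed

lemma sum_ref_lift:
  assumes "Ref \<notin> X" "j < k0"
  shows "(\<Sum>x\<in>basis d X. G x) = (\<Sum>c\<in>basis (d(Ref := k0)) (insert Ref X). (if c Ref = j then G (restr X c) else 0))"
proof -
  have "(\<Sum>c\<in>basis (d(Ref := k0)) (insert Ref X). (if c Ref = j then G (restr X c) else 0))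
     = (\<Sum>c\<in>basis (d(Ref := k0)) (insert Ref X - {Ref}). \<Sum>i<k0. (if i = j then G (restr X (c(Ref := i))) else 0))"
    by (subst basis_fun_upd_split[where L = Ref]) auto
  also have "\<dots> = (\<Sum>c\<in>basis d X. \<Sum>i<k0. (if i = j then G (restr X (c(Ref := i))) else 0))"
    using assms(1) by (simp add: basis_upd_notin insert_Diff_if)
  also have "\<dots> = (\<Sum>c\<in>basis d X. G c)"
  proof (rule sum.cong[OF refl])
    fix c assume c: "c \<in> basis d X"
    have "restr X (c(Ref := j)) = c" using c assms(1) by (auto simp: restr_def basis_def fun_eq_iff)
    then show "(\<Sum>i<k0. (if i = j then G (restr X (c(Ref := i))) else 0)) = G c"
      using assms(2) by (simp add: sum.delta)
  qed
  finally show ?thesis by simp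
qed

lemma qf_sum_nonneg:
  assumes "finite K" "\<And>k. k \<in> K \<Longrightarrow> Im (q k) = 0 \<and> 0 \<le> Re (q k)"
  shows "Im (\<Sum>k\<in>K. q k) = 0 \<and> 0 \<le> Re (\<Sum>k\<in>K. q k)"
  using assms by (auto simp: Im_sum Re_sum intro: sum_nonneg)

lemma sum_swap5:
  "(\<Sum>a\<in>A. \<Sum>b\<in>B. \<Sum>c\<in>C. \<Sum>e\<in>E. \<Sum>k\<in>K. f a b c e k) = (\<Sum>k\<in>K. \<Sum>c\<in>C. \<Sum>e\<in>E. \<Sum>a\<in>A. \<Sum>b\<in>B. (f a b c e k :: 'z :: comm_monoid_add))"
proof -
  have "(\<Sum>a\<in>A. \<Sum>b\<in>B. \<Sum>c\<in>C. \<Sum>e\<in>E. \<Sum>k\<in>K. f a b c e k) = (\<Sum>a\<in>A. \<Sum>b\<in>B. \<Sum>c\<in>C. \<Sum>k\<in>K. \<Sum>e\<in>E. f a b c e k)"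
    by (rule sum.cong[OF refl], rule sum.cong[OF refl], rule sum.cong[OF refl]) (rule sum.swap)
  also have "\<dots> = (\<Sum>a\<in>A. \<Sum>b\<in>B. \<Sum>k\<in>K. \<Sum>c\<in>C. \<Sum>e\<in>E. f a b c e k)"
    by (rule sum.cong[OF refl], rule sum.cong[OF refl]) (rule sum.swap)
  also have "\<dots> = (\<Sum>a\<in>A. \<Sum>k\<in>K. \<Sum>b\<in>B. \<Sum>c\<in>C. \<Sum>e\<in>E. f a b c e k)"
    by (rule sum.cong[OF refl]) (rule sum.swap)
  also have "\<dots> = (\<Sum>k\<in>K. \<Sum>a\<in>A. \<Sum>b\<in>B. \<Sum>c\<in>C. \<Sum>e\<in>E. f a b c e k)"
    by (rule sum.swap)
  also have "\<dots> = (\<Sum>k\<in>K. \<Sum>c\<in>C. \<Sum>e\<in>E. \<Sum>a\<in>A. \<Sum>b\<in>B. f a b c e k)"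
    by (rule sum.cong[OF refl]) (rule sum_swap4)
  finally show ?thesis .
qed

lemma mkmap_cp:
  assumes XY: "X \<inter> Y = {}" and R: "Ref \<notin> X" "Ref \<notin> Y" and K: "finite K"
    and J: "\<forall>a\<in>basis d (X \<union> Y). \<forall>b\<in>basis d (X \<union> Y). J a b = (\<Sum>k\<in>K. v k a * cnj (v k b))"
  shows "is_cp d X Y (mkmap d X J)"
  unfolding is_cp_def
proof (intro allI impI)
  fix k0 :: nat and \<rho> :: op
  assume k0: "1 \<le> k0" and psd: "psd (d(Ref := k0)) (insert Ref X) \<rho>"
  define d' where "d' = d(Ref := k0)"
  define BX where "BX = basis d' (insert Ref X)"
  define BY where "BY = basis d' (insert Ref Y)"
  define rm where "rm = restr (- {Ref})"
  show "psd (d(Ref := k0)) (insert Ref Y) (ampl (mkmap d X J) \<rho>)"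
    unfolding psd_qf d'_def[symmetric] BY_def[symmetric]
  proof
    fix u :: vec
    define g where "g k c = (\<Sum>b\<in>BY. (if c Ref = b Ref then u b * cnj (v k (join X (restr X c) (rm b))) else 0))" for k c
    have rmb: "rm a \<in> basis d Y" if "a \<in> BY" for a
      using that R by (auto simp: BY_def d'_def rm_def basis_def restr_def)
    have jin: "join X x (rm a) \<in> basis d (X \<union> Y)" if "a \<in> BY" "x \<in> basis d X" for a x
      using join_in_basis[OF that(2) rmb[OF that(1)] XY] .
    have aR: "a Ref < k0" if "a \<in> BY" for a using that by (auto simp: BY_def d'_def basis_def)
    have jc: "join {Ref} a (restr X c) = c" if "c \<in> BX" "c Ref = a Ref" for a c
      using that by (auto simp: BX_def d'_def basis_def join_def restr_def fun_eq_iff)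
    have "qf BY (ampl (mkmap d X J) \<rho>) u =
      (\<Sum>a\<in>BY. \<Sum>b\<in>BY. cnj (u a) * (\<Sum>x\<in>basis d X. \<Sum>y\<in>basis d X. \<rho> (join {Ref} a x) (join {Ref} b y) *
          (\<Sum>k\<in>K. v k (join X x (rm a)) * cnj (v k (join X y (rm b)))))  * u b)"
      unfolding qf_def ampl_def mkmap_def rm_def[symmetric]
      using J jin by (intro sum.cong refl) (simp add: basis_upd_notin[OF R(1)])
    also have "\<dots> = (\<Sum>a\<in>BY. \<Sum>b\<in>BY. \<Sum>x\<in>basis d X. \<Sum>y\<in>basis d X. \<Sum>k\<in>K.
          cnj (u a) * \<rho> (join {Ref} a x) (join {Ref} b y) * v k (join X x (rm a)) * cnj (v k (join X y (rm b))) * u b)"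
      by (simp add: sum_distrib_left sum_distrib_right mult.assoc)
    also have "\<dots> = (\<Sum>a\<in>BY. \<Sum>b\<in>BY. \<Sum>c\<in>BX. \<Sum>c'\<in>BX. \<Sum>k\<in>K.
          (if c Ref = a Ref then 1 else 0) * (if c' Ref = b Ref then 1 else 0) *
          (cnj (u a) * \<rho> c c' * v k (join X (restr X c) (rm a)) * cnj (v k (join X (restr X c') (rm b))) * u b))"
    proof (rule sum.cong[OF refl], rule sum.cong[OF refl])
      fix a b assume a: "a \<in> BY" and b: "b \<in> BY"
      have "(\<Sum>x\<in>basis d X. \<Sum>y\<in>basis d X. \<Sum>k\<in>K.
          cnj (u a) * \<rho> (join {Ref} a x) (join {Ref} b y) * v k (join X x (rm a)) * cnj (v k (join X y (rm b))) * u b)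
        = (\<Sum>c\<in>BX. if c Ref = a Ref then (\<Sum>y\<in>basis d X. \<Sum>k\<in>K.
          cnj (u a) * \<rho> (join {Ref} a (restr X c)) (join {Ref} b y) * v k (join X (restr X c) (rm a)) * cnj (v k (join X y (rm b))) * u b) else 0)"
        unfolding BX_def d'_def by (rule sum_ref_lift[OF R(1) aR[OF a]])
      also have "\<dots> = (\<Sum>c\<in>BX. if c Ref = a Ref then (\<Sum>c'\<in>BX. if c' Ref = b Ref then (\<Sum>k\<in>K.
          cnj (u a) * \<rho> c c' * v k (join X (restr X c) (rm a)) * cnj (v k (join X (restr X c') (rm b))) * u b) else 0) else 0)"
      proof (rule sum.cong[OF refl], rule if_cong[OF refl])
        fix c assume c: "c \<in> BX" and cR: "c Ref = a Ref"
        show "(\<Sum>y\<in>basis d X. \<Sum>k\<in>K.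
          cnj (u a) * \<rho> (join {Ref} a (restr X c)) (join {Ref} b y) * v k (join X (restr X c) (rm a)) * cnj (v k (join X y (rm b))) * u b)
          = (\<Sum>c'\<in>BX. if c' Ref = b Ref then (\<Sum>k\<in>K.
          cnj (u a) * \<rho> c c' * v k (join X (restr X c) (rm a)) * cnj (v k (join X (restr X c') (rm b))) * u b) else 0)"
          unfolding jc[of c a, OF c cR] unfolding BX_def d'_def
          by (subst sum_ref_lift[OF R(1) aR[OF b]]) (intro sum.cong refl, auto simp: jc[unfolded BX_def d'_def])
      qed auto
      finally show "(\<Sum>x\<in>basis d X. \<Sum>y\<in>basis d X. \<Sum>k\<in>K.
          cnj (u a) * \<rho> (join {Ref} a x) (join {Ref} b y) * v k (join X x (rm a)) * cnj (v k (join X y (rm b))) * u b)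
        = (\<Sum>c\<in>BX. \<Sum>c'\<in>BX. \<Sum>k\<in>K.
          (if c Ref = a Ref then 1 else 0) * (if c' Ref = b Ref then 1 else 0) *
          (cnj (u a) * \<rho> c c' * v k (join X (restr X c) (rm a)) * cnj (v k (join X (restr X c') (rm b))) * u b))"
        by (auto intro!: sum.cong simp: sum_distrib_left)
    qed
    also have "\<dots> = (\<Sum>k\<in>K. \<Sum>c\<in>BX. \<Sum>c'\<in>BX. \<Sum>a\<in>BY. \<Sum>b\<in>BY.
          (if c Ref = a Ref then 1 else 0) * (if c' Ref = b Ref then 1 else 0) *
          (cnj (u a) * \<rho> c c' * v k (join X (restr X c) (rm a)) * cnj (v k (join X (restr X c') (rm b))) * u b))"
      by (rule sum_swap5)
    also have "\<dots> = (\<Sum>k\<in>K. qf BX \<rho> (g k))"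
      unfolding qf_def
    proof (rule sum.cong[OF refl], rule sum.cong[OF refl], rule sum.cong[OF refl])
      fix k c c'
      have "cnj (g k c) * \<rho> c c' * g k c' = (\<Sum>a\<in>BY. \<Sum>b\<in>BY. (if c Ref = a Ref then cnj (u a) * v k (join X (restr X c) (rm a)) else 0)
          * \<rho> c c' * (if c' Ref = b Ref then u b * cnj (v k (join X (restr X c') (rm b))) else 0))"
        unfolding g_def cnj_sum sum_product sum_distrib_right
        by (intro sum.cong refl) (auto simp: sum_distrib_left)
      also have "\<dots> = (\<Sum>a\<in>BY. \<Sum>b\<in>BY.
          (if c Ref = a Ref then 1 else 0) * (if c' Ref = b Ref then 1 else 0) *
          (cnj (u a) * \<rho> c c' * v k (join X (restr X c) (rm a)) * cnj (v k (join X (restr X c') (rm b))) * u b))"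
        by (intro sum.cong refl) (simp add: ac_simps)
      finally show "(\<Sum>a\<in>BY. \<Sum>b\<in>BY.
          (if c Ref = a Ref then 1 else 0) * (if c' Ref = b Ref then 1 else 0) *
          (cnj (u a) * \<rho> c c' * v k (join X (restr X c) (rm a)) * cnj (v k (join X (restr X c') (rm b))) * u b))
          = cnj (g k c) * \<rho> c c' * g k c'" by simp
    qed
    finally have eq: "qf BY (ampl (mkmap d X J) \<rho>) u = (\<Sum>k\<in>K. qf BX \<rho> (g k))" .
    have "Im (qf BX \<rho> (g k)) = 0 \<and> 0 \<le> Re (qf BX \<rho> (g k))" for k
      using psd unfolding psd_qf d'_def[symmetric] BX_def[symmetric] by blast
    then show "Im (qf BY (ampl (mkmap d X J) \<rho>) u) = 0 \<and> 0 \<le> Re (qf BY (ampl (mkmap d X J) \<rho>) u)"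
      unfolding eq by (intro qf_sum_nonneg K)
  qed
qed

definition qfB :: "'a set \<Rightarrow> ('a \<Rightarrow> 'a \<Rightarrow> complex) \<Rightarrow> ('a \<Rightarrow> complex) \<Rightarrow> complex" where
  "qfB B A v = (\<Sum>x\<in>B. \<Sum>y\<in>B. cnj (v x) * A x y * v y)"

definition psdB :: "'a set \<Rightarrow> ('a \<Rightarrow> 'a \<Rightarrow> complex) \<Rightarrow> bool" where
  "psdB B A \<longleftrightarrow> (\<forall>v. Im (qfB B A v) = 0 \<and> 0 \<le> Re (qfB B A v))"

lemma psd_psdB: "psd d S A \<longleftrightarrow> psdB (basis d S) A"
  by (simp add: psd_def psdB_def qfB_def)

lemma qfB_support:
  assumes "finite B" "S \<subseteq> B" "\<forall>z\<in>B - S. v z = 0"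
  shows "qfB B A v = qfB S A v"
proof -
  have "qfB B A v = (\<Sum>x\<in>B. \<Sum>y\<in>S. cnj (v x) * A x y * v y)"
    unfolding qfB_def using assms by (intro sum.cong[OF refl] sum.mono_neutral_right) auto
  also have "\<dots> = qfB S A v"
    unfolding qfB_def by (rule sum.mono_neutral_right) (use assms in \<open>auto intro: finite_subset\<close>)
  finally show ?thesis .
qed

lemma psdB_subset:
  assumes "psdB B A" "finite B" "S \<subseteq> B"
  shows "psdB S A"
  unfolding psdB_def
proof
  fix v :: "'a \<Rightarrow> complex"
  define u where "u z = (if z \<in> S then v z else 0)" for z
  have "qfB B A u = qfB S A u" using assms by (intro qfB_support) (auto simp: u_def)
  also have "\<dots> = qfB S A v" unfolding qfB_def u_def by (intro sum.cong refl) auto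
  finally show "Im (qfB S A v) = 0 \<and> 0 \<le> Re (qfB S A v)" using assms(1) unfolding psdB_def by metis
qed

lemma psdB_two:
  assumes "psdB B A" "finite B" "x \<in> B" "y \<in> B" "x \<noteq> y"
  shows "Im (cnj a * a * A x x + cnj a * b * A x y + cnj b * a * A y x + cnj b * b * A y y) = 0 \<and>
         0 \<le> Re (cnj a * a * A x x + cnj a * b * A x y + cnj b * a * A y x + cnj b * b * A y y)"
proof -
  define v where "v z = (if z = x then a else if z = y then b else 0)" for z
  have "qfB B A v = qfB {x, y} A v" using assms by (intro qfB_support) (auto simp: v_def)
  also have "\<dots> = cnj a * a * A x x + cnj a * b * A x y + cnj b * a * A y x + cnj b * b * A y y"
    using assms by (simp add: qfB_def v_def algebra_simps)
  finally show ?thesis using assms(1) unfolding psdB_def by metis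
qed

lemma psdB_diag:
  assumes "psdB B A" "finite B" "x \<in> B"
  shows "Im (A x x) = 0 \<and> 0 \<le> Re (A x x)"
proof -
  define v where "v z = (if z = x then 1 else 0 :: complex)" for z
  have "qfB B A v = qfB {x} A v" using assms by (intro qfB_support) (auto simp: v_def)
  also have "\<dots> = A x x" by (simp add: qfB_def v_def)
  finally show ?thesis using assms(1) unfolding psdB_def by metis
qed

lemma psdB_herm:
  assumes "psdB B A" "finite B" "x \<in> B" "y \<in> B"
  shows "A y x = cnj (A x y)"
proof (cases "x = y")
  case True
  then show ?thesis using psdB_diag[OF assms(1,2,3)] by (simp add: complex_eq_iff)
next
  case False
  have 1: "Im (A x y + A y x) = 0"
    using psdB_two[OF assms False, of 1 1] psdB_diag[OF assms(1,2,3)] psdB_diag[OF assms(1,2,4)] by simp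
  have 2: "Im (\<i> * A x y - \<i> * A y x) = 0"
    using psdB_two[OF assms False, of 1 \<i>] psdB_diag[OF assms(1,2,3)] psdB_diag[OF assms(1,2,4)] by simp
  show ?thesis using 1 2 by (simp add: complex_eq_iff)
qed

lemma psdB_zero_row:
  assumes "psdB B A" "finite B" "s \<in> B" "y \<in> B" "A s s = 0"
  shows "A s y = 0"
proof (rule ccontr)
  assume nz: "A s y \<noteq> 0"
  then have sy: "s \<noteq> y" using assms by auto
  define c where "c = (Re (A y y) + 1) / (2 * (cmod (A s y))^2)"
  have cpos: "c > 0" unfolding c_def using psdB_diag[OF assms(1,2,4)] nz by (auto intro!: divide_pos_pos)
  define t where "t = - of_real c * A s y"
  have h: "A y s = cnj (A s y)" using psdB_herm[OF assms(1,2,3,4)] .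
  have "0 \<le> Re (cnj t * t * A s s + cnj t * 1 * A s y + cnj 1 * t * A y s + cnj 1 * 1 * A y y)"
    using psdB_two[OF assms(1,2,3,4) sy, of t 1] by blast
  also have "Re (cnj t * t * A s s + cnj t * 1 * A s y + cnj 1 * t * A y s + cnj 1 * 1 * A y y)
       = Re (A y y) - 2 * c * (cmod (A s y))^2"
  proof -
    have cm: "cmod (A s y) * cmod (A s y) = Re (A s y) * Re (A s y) + Im (A s y) * Im (A s y)"
      by (metis cmod_power2 power2_eq_square)
    show ?thesis unfolding t_def h assms(5) by (simp add: power2_eq_square algebra_simps cm)
  qed
  also have "\<dots> = -1" unfolding c_def using nz by (simp add: field_simps)
  finally show False by simp
qed

lemma sum_if_const: "(\<Sum>y\<in>C. if Q then f y else 0) = (if Q then (\<Sum>y\<in>C. f y) else (0::'z::comm_monoid_add))"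
  by simp

lemma qfB_shift:
  assumes "finite B" "s \<in> B"
  shows "qfB B A (\<lambda>x. v x - (if x = s then t else 0)) =
    qfB B A v - t * (\<Sum>x\<in>B. cnj (v x) * A x s) - cnj t * (\<Sum>y\<in>B. A s y * v y) + cnj t * t * A s s"
proof -
  have "qfB B A (\<lambda>x. v x - (if x = s then t else 0)) =
    (\<Sum>x\<in>B. \<Sum>y\<in>B. cnj (v x) * A x y * v y - (if y = s then cnj (v x) * A x y * t else 0)
       - (if x = s then cnj t * A x y * v y else 0) + (if x = s then (if y = s then cnj t * A x y * t else 0) else 0))"
    unfolding qfB_def by (intro sum.cong refl) (auto simp: algebra_simps)
  also have "\<dots> = qfB B A v - t * (\<Sum>x\<in>B. cnj (v x) * A x s) - cnj t * (\<Sum>y\<in>B. A s y * v y) + cnj t * t * A s s"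
    using assms unfolding qfB_def sum.distrib sum_subtractf sum_if_const
    by (simp add: sum.delta sum.delta' sum_distrib_left sum_distrib_right mult.assoc mult.left_commute) (intro sum.cong refl, simp add: ac_simps)
  finally show ?thesis .
qed

lemma psdB_decomp_zero:
  assumes IH: "\<And>A. psdB B A \<Longrightarrow> \<exists>(n::nat) m. \<forall>a\<in>B. \<forall>b\<in>B. A a b = (\<Sum>k<n. m k a * cnj (m k b))"
    and fin: "finite B" and psd: "psdB (insert s B) A" and z: "A s s = 0"
  shows "\<exists>(n::nat) m. \<forall>a\<in>insert s B. \<forall>b\<in>insert s B. A a b = (\<Sum>k<n. m k a * cnj (m k b))"
proof -
  have fin1: "finite (insert s B)" using fin by simp
  have row: "A s y = 0" if "y \<in> insert s B" for y using psdB_zero_row[OF psd fin1 _ that z] by simp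
  have col: "A y s = 0" if "y \<in> insert s B" for y
    using psdB_herm[OF psd fin1 _ that, of s] row[OF that] by simp
  have "psdB B A" using psdB_subset[OF psd fin1] by blast
  from IH[OF this] obtain n :: nat and m where nm: "\<forall>a\<in>B. \<forall>b\<in>B. A a b = (\<Sum>k<n. m k a * cnj (m k b))" by blast
  define m' where "m' k x = (if x = s then 0 else m k x)" for k x
  have "\<forall>a\<in>insert s B. \<forall>b\<in>insert s B. A a b = (\<Sum>k<n. m' k a * cnj (m' k b))"
  proof (intro ballI)
    fix a b assume a: "a \<in> insert s B" and b: "b \<in> insert s B"
    show "A a b = (\<Sum>k<n. m' k a * cnj (m' k b))"
    proof (cases "a = s \<or> b = s")
      case True then show ?thesis using row[OF b] col[OF a] by (auto simp: m'_def)
    next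
      case False then show ?thesis using a b nm by (auto simp: m'_def)
    qed
  qed
  then show ?thesis by blast
qed

lemma psdB_decomp:
  assumes "finite B" "psdB B A"
  shows "\<exists>(n::nat) m. \<forall>a\<in>B. \<forall>b\<in>B. A a b = (\<Sum>k<n. m k a * cnj (m k b))"
  using assms
proof (induction B arbitrary: A rule: finite_induct)
  case empty then show ?case by auto
next
  case (insert s B)
  define B1 where "B1 = insert s B"
  have fin1: "finite B1" using insert by (simp add: B1_def)
  have s1: "s \<in> B1" by (simp add: B1_def)
  show ?case
  proof (cases "A s s = 0")
    case True
    then show ?thesis using psdB_decomp_zero[OF insert.IH insert.hyps(1) insert.prems] by blast
  next
    case False
    have psd: "psdB B1 A" using insert.prems by (simp add: B1_def)
    have dg: "Im (A s s) = 0 \<and> 0 \<le> Re (A s s)" using psdB_diag[OF psd fin1 s1] .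
    define \<alpha> where "\<alpha> = Re (A s s)"
    have Ass: "A s s = of_real \<alpha>" using dg by (simp add: \<alpha>_def complex_eq_iff)
    have a0: "0 \<le> \<alpha>" using dg unfolding \<alpha>_def by simp
    have a1: "\<alpha> \<noteq> 0" using False Ass by auto
    have apos: "\<alpha> > 0" using a0 a1 by simp
    define m0 where "m0 x = A x s / of_real (sqrt \<alpha>)" for x
    define A' where "A' x y = A x y - m0 x * cnj (m0 y)" for x y
    have herm: "A y x = cnj (A x y)" if "x \<in> B1" "y \<in> B1" for x y using psdB_herm[OF psd fin1 that] .
    have sq: "of_real (sqrt \<alpha>) * of_real (sqrt \<alpha>) = (of_real \<alpha> :: complex)"
    proof -
      have "sqrt \<alpha> * sqrt \<alpha> = \<alpha>" using apos by simp
      then show ?thesis unfolding of_real_mult[symmetric] by simp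
    qed
    have A'ss: "A' s s = 0"
    proof -
      have "m0 s * cnj (m0 s) = of_real \<alpha> * of_real \<alpha> / (of_real (sqrt \<alpha>) * of_real (sqrt \<alpha>))"
        unfolding m0_def Ass by simp
      also have "\<dots> = of_real \<alpha>" using sq apos by simp
      finally show ?thesis unfolding A'_def Ass by simp
    qed
    have psd': "psdB B1 A'"
      unfolding psdB_def
    proof
      fix v :: "'a \<Rightarrow> complex"
      define S where "S = (\<Sum>y\<in>B1. A s y * v y)"
      define t where "t = S / of_real \<alpha>"
      have c1: "(\<Sum>x\<in>B1. cnj (v x) * A x s) = cnj S"
        unfolding S_def cnj_sum
      proof (rule sum.cong[OF refl])
        fix x assume x: "x \<in> B1"
        have "A x s = cnj (A s x)" using herm[OF s1 x] .
        then show "cnj (v x) * A x s = cnj (A s x * v x)" by (simp add: mult.commute)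
      qed
      have "qfB B1 A' v = qfB B1 A v - (\<Sum>x\<in>B1. cnj (v x) * m0 x) * (\<Sum>y\<in>B1. cnj (m0 y) * v y)"
        unfolding qfB_def A'_def sum_product
        by (simp add: sum_subtractf algebra_simps)
      also have "(\<Sum>x\<in>B1. cnj (v x) * m0 x) = cnj S / of_real (sqrt \<alpha>)"
        unfolding m0_def c1[symmetric] by (simp add: sum_divide_distrib)
      also have "(\<Sum>y\<in>B1. cnj (m0 y) * v y) = S / of_real (sqrt \<alpha>)"
        unfolding m0_def S_def sum_divide_distrib
      proof (rule sum.cong[OF refl])
        fix x assume x: "x \<in> B1"
        have "A x s = cnj (A s x)" using herm[OF s1 x] .
        then show "cnj (A x s / complex_of_real (sqrt \<alpha>)) * v x = A s x * v x / complex_of_real (sqrt \<alpha>)" by simp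
      qed
      also have "qfB B1 A v - cnj S / of_real (sqrt \<alpha>) * (S / of_real (sqrt \<alpha>)) = qfB B1 A v - cnj S * S / of_real \<alpha>"
        using sq by (simp add: field_simps)
      also have "\<dots> = qfB B1 A (\<lambda>x. v x - (if x = s then t else 0))"
        unfolding qfB_shift[OF fin1 s1] c1 S_def[symmetric] t_def Ass using apos
        by (simp add: field_simps)
      finally have "qfB B1 A' v = qfB B1 A (\<lambda>x. v x - (if x = s then t else 0))" .
      then show "Im (qfB B1 A' v) = 0 \<and> 0 \<le> Re (qfB B1 A' v)" using psd unfolding psdB_def by metis
    qed
    obtain n :: nat and m where nm: "\<forall>a\<in>B1. \<forall>b\<in>B1. A' a b = (\<Sum>k<n. m k a * cnj (m k b))"
      using psdB_decomp_zero[OF insert.IH insert.hyps(1) psd'[unfolded B1_def] A'ss] unfolding B1_def by blast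
    define m' where "m' k = (if k < n then m k else m0)" for k
    have "\<forall>a\<in>B1. \<forall>b\<in>B1. A a b = (\<Sum>k<Suc n. m' k a * cnj (m' k b))"
      using nm unfolding A'_def m'_def by (auto simp: algebra_simps)
    then show ?thesis unfolding B1_def by blast
  qed
qed

lemma psdB_proj: "psdB B (proj f)"
  unfolding psdB_def
proof
  fix v
  define S where "S = (\<Sum>y\<in>B. cnj (f y) * v y)"
  have "qfB B (proj f) v = cnj S * S"
    unfolding qfB_def proj_def S_def cnj_sum sum_product by (intro sum.cong refl) (simp add: algebra_simps)
  also have "\<dots> = of_real ((cmod S)^2)"
    by (metis complex_norm_square mult.commute)
  finally show "Im (qfB B (proj f) v) = 0 \<and> 0 \<le> Re (qfB B (proj f) v)" by simp
qed

lemma qfB_reindex: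
  assumes "bij_betw g B1 B2"
  shows "qfB B1 (\<lambda>a b. A (g a) (g b)) (\<lambda>a. v (g a)) = qfB B2 A v"
proof -
  have "qfB B1 (\<lambda>a b. A (g a) (g b)) (\<lambda>a. v (g a)) = (\<Sum>x\<in>B1. \<Sum>y\<in>B2. cnj (v (g x)) * A (g x) y * v y)"
    unfolding qfB_def by (intro sum.cong refl) (rule sum.reindex_bij_betw[OF assms])
  also have "\<dots> = qfB B2 A v"
    unfolding qfB_def by (rule sum.reindex_bij_betw[OF assms, where g = "\<lambda>x. \<Sum>y\<in>B2. cnj (v x) * A x y * v y"])
  finally show ?thesis .
qed

lemma choi_psd:
  assumes lin: "is_linear_map d X Y \<Phi>" and cp: "is_cp d X Y \<Phi>"
    and XY: "X \<inter> Y = {}" and R: "Ref \<notin> X" "Ref \<notin> Y" and ne: "basis d X \<noteq> {}"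
  shows "psdB (basis d (X \<union> Y)) (choi X Y \<Phi>)"
proof -
  define k0 where "k0 = card (basis d X)"
  have k0: "1 \<le> k0" using ne unfolding k0_def by (simp add: Suc_le_eq card_gt_0_iff)
  obtain h where h: "bij_betw h {0..<k0} (basis d X)"
    using ex_bij_betw_nat_finite[OF finite_basis[of d X]] unfolding k0_def by blast
  define enc where "enc = inv_into {0..<k0} h"
  have hin: "h j \<in> basis d X" if "j < k0" for j using h that by (auto simp: bij_betw_def)
  have ench: "enc (h j) = j" if "j < k0" for j using h that unfolding enc_def
    by (simp add: bij_betw_def inv_into_f_f)
  have henc: "h (enc x) = x" if "x \<in> basis d X" for x using h that unfolding enc_def
    by (simp add: bij_betw_def f_inv_into_f)
  have encl: "enc x < k0" if "x \<in> basis d X" for x using h that unfolding enc_def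
    by (metis atLeastLessThan_iff bij_betw_def inv_into_into)
  define d' where "d' = d(Ref := k0)"
  define BY where "BY = basis d' (insert Ref Y)"
  define rm where "rm = restr (- {Ref})"
  define f where "f c = (if c Ref < k0 \<and> restr X c = h (c Ref) then 1 else 0 :: complex)" for c
  have "psd d' (insert Ref X) (proj f)" unfolding psd_psdB by (rule psdB_proj)
  then have psdA: "psdB BY (ampl \<Phi> (proj f))" using cp k0 unfolding is_cp_def psd_psdB d'_def BY_def by blast
  have aR: "a Ref < k0" if "a \<in> BY" for a using that by (auto simp: BY_def d'_def basis_def)
  have rma: "rm a \<in> basis d Y" if "a \<in> BY" for a
    using that R by (auto simp: BY_def d'_def rm_def basis_def restr_def)
  define g where "g a = join X (h (a Ref)) (rm a)" for a
  have amp: "ampl \<Phi> (proj f) a b = choi X Y \<Phi> (g a) (g b)" if a: "a \<in> BY" and b: "b \<in> BY" for a b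
  proof -
    have oe: "op_eq d X (\<lambda>x y. proj f (join {Ref} a x) (join {Ref} b y)) (unit_op (h (a Ref)) (h (b Ref)))"
      unfolding op_eq_def
    proof (intro ballI)
      fix x y assume x: "x \<in> basis d X" and y: "y \<in> basis d X"
      have rx: "restr X (join {Ref} a x) = x" using x R by (auto simp: restr_def join_def basis_def fun_eq_iff)
      have ry: "restr X (join {Ref} b y) = y" using y R by (auto simp: restr_def join_def basis_def fun_eq_iff)
      show "proj f (join {Ref} a x) (join {Ref} b y) = unit_op (h (a Ref)) (h (b Ref)) x y"
        unfolding proj_def f_def unit_op_def using rx ry aR[OF a] aR[OF b] by (auto simp: join_def)
    qed
    have "op_eq d Y (\<Phi> (\<lambda>x y. proj f (join {Ref} a x) (join {Ref} b y))) (\<Phi> (unit_op (h (a Ref)) (h (b Ref))))"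
      using lin oe unfolding is_linear_map_def by blast
    then have "ampl \<Phi> (proj f) a b = \<Phi> (unit_op (h (a Ref)) (h (b Ref))) (rm a) (rm b)"
      using rma[OF a] rma[OF b] unfolding op_eq_def ampl_def rm_def by blast
    moreover have "restr X (g a) = h (a Ref)" "restr X (g b) = h (b Ref)"
      using hin[OF aR[OF a]] hin[OF aR[OF b]] by (auto simp: g_def restr_def join_def basis_def fun_eq_iff)
    moreover have "restr Y (g a) = rm a" "restr Y (g b) = rm b"
      using rma[OF a] rma[OF b] XY by (auto simp: g_def restr_def join_def basis_def fun_eq_iff)
    ultimately show ?thesis unfolding choi_def by simp
  qed
  have bij: "bij_betw g BY (basis d (X \<union> Y))"
  proof (rule bij_betwI[where g = "\<lambda>p. (restr Y p)(Ref := enc (restr X p))"])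
    show "g \<in> BY \<rightarrow> basis d (X \<union> Y)"
      using hin aR rma XY by (auto simp: g_def intro!: join_in_basis)
    show "(\<lambda>p. (restr Y p)(Ref := enc (restr X p))) \<in> basis d (X \<union> Y) \<rightarrow> BY"
    proof
      fix p assume p: "p \<in> basis d (X \<union> Y)"
      have "restr X p \<in> basis d X" using p by (auto intro: restr_in_basis)
      then show "(restr Y p)(Ref := enc (restr X p)) \<in> BY"
        using p R encl unfolding BY_def d'_def by (auto simp: basis_def restr_def)
    qed
    show "(restr Y (g a))(Ref := enc (restr X (g a))) = a" if a: "a \<in> BY" for a
    proof -
      have "restr X (g a) = h (a Ref)" using hin[OF aR[OF a]] by (auto simp: g_def restr_def join_def basis_def fun_eq_iff)
      moreover have "restr Y (g a) = rm a" using rma[OF a] XY by (auto simp: g_def restr_def join_def basis_def fun_eq_iff)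
      ultimately show ?thesis using ench[OF aR[OF a]] a R
        by (auto simp: rm_def restr_def fun_eq_iff BY_def d'_def basis_def)
    qed
    show "g ((restr Y p)(Ref := enc (restr X p))) = p" if p: "p \<in> basis d (X \<union> Y)" for p
    proof -
      have rX: "restr X p \<in> basis d X" using p by (auto intro: restr_in_basis)
      show ?thesis unfolding g_def using henc[OF rX] p R
        by (auto simp: rm_def restr_def join_def fun_eq_iff basis_def)
    qed
  qed
  show ?thesis unfolding psdB_def
  proof
    fix v
    have "qfB BY (ampl \<Phi> (proj f)) (\<lambda>a. v (g a)) = qfB BY (\<lambda>a b. choi X Y \<Phi> (g a) (g b)) (\<lambda>a. v (g a))"
      unfolding qfB_def using amp by (intro sum.cong refl) auto
    also have "\<dots> = qfB (basis d (X \<union> Y)) (choi X Y \<Phi>) v" by (rule qfB_reindex[OF bij])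
    finally show "Im (qfB (basis d (X \<union> Y)) (choi X Y \<Phi>) v) = 0 \<and> 0 \<le> Re (qfB (basis d (X \<union> Y)) (choi X Y \<Phi>) v)"
      using psdA unfolding psdB_def by metis
  qed
qed

lemma choi_tp:
  assumes tp: "is_tp d X Y \<Phi>" and XY: "X \<inter> Y = {}" and x: "x \<in> basis d X" and y: "y \<in> basis d X"
  shows "(\<Sum>s\<in>basis d Y. choi X Y \<Phi> (join X x s) (join X y s)) = id_op x y"
proof -
  have "(\<Sum>s\<in>basis d Y. choi X Y \<Phi> (join X x s) (join X y s)) = (\<Sum>s\<in>basis d Y. \<Phi> (unit_op x y) s s)"
  proof (rule sum.cong[OF refl])
    fix s assume s: "s \<in> basis d Y"
    have "restr X (join X x s) = x" "restr X (join X y s) = y" using x y by (auto simp: restr_def join_def basis_def fun_eq_iff)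
    moreover have "restr Y (join X x s) = s" "restr Y (join X y s) = s" using s XY by (auto simp: restr_def join_def basis_def fun_eq_iff)
    ultimately show "choi X Y \<Phi> (join X x s) (join X y s) = \<Phi> (unit_op x y) s s" unfolding choi_def by simp
  qed
  also have "\<dots> = trace d X (unit_op x y)" using tp unfolding is_tp_def trace_def by metis
  also have "\<dots> = id_op x y" unfolding trace_def unit_op_def id_op_def using x
    by (cases "x = y") (auto simp: sum.delta intro!: sum.neutral)
  finally show ?thesis .
qed

lemma kraus_of_cptp:
  assumes "is_cptp d X Y \<Phi>" "X \<inter> Y = {}" "Ref \<notin> X" "Ref \<notin> Y" "basis d X \<noteq> {}"
  shows "\<exists>(n::nat) m. (\<forall>a\<in>basis d (X \<union> Y). \<forall>b\<in>basis d (X \<union> Y). choi X Y \<Phi> a b = (\<Sum>k<n. m k a * cnj (m k b))) \<and>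
     (\<forall>x\<in>basis d X. \<forall>y\<in>basis d X. (\<Sum>s\<in>basis d Y. choi X Y \<Phi> (join X x s) (join X y s)) = id_op x y)"
  using psdB_decomp[OF finite_basis choi_psd[of d X Y \<Phi>]] choi_tp[of d X Y \<Phi>] assms unfolding is_cptp_def by blast

lemma cptp_choi_from_kraus:
  assumes XY: "X \<inter> Y = {}" and R: "Ref \<notin> X" "Ref \<notin> Y" and K: "finite K"
    and J: "\<forall>a\<in>basis d (X \<union> Y). \<forall>b\<in>basis d (X \<union> Y). J a b = (\<Sum>k\<in>K. v k a * cnj (v k b))"
    and tp: "\<forall>x\<in>basis d X. \<forall>y\<in>basis d X. (\<Sum>s\<in>basis d Y. J (join X x s) (join X y s)) = id_op x y"
  shows "is_cptp_choi d X Y J"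
  unfolding is_cptp_choi_def is_cptp_def
  using mkmap_linear mkmap_cp[OF XY R K J] mkmap_tp[OF tp] mkmap_choi[OF XY] by blast

fun ps :: "party \<Rightarrow> party" where
  "ps P = F" | "ps F = P" | "ps AI = AO" | "ps AO = AI" | "ps BI = BO" | "ps BO = BI"
| "ps AI' = AO'" | "ps AO' = AI'" | "ps BI' = BO'" | "ps BO' = BI'" | "ps Ref = Ref"

lemma ps_ps[simp]: "ps (ps l) = l" by (cases l) auto

definition fs :: "bidx \<Rightarrow> bidx" where "fs x = (\<lambda>l. x (ps l))"

lemma fs_fs[simp]: "fs (fs x) = x" by (simp add: fs_def)

definition symd :: "dims \<Rightarrow> bool" where "symd d \<longleftrightarrow> (\<forall>l. d (ps l) = d l)"

lemma fs_basis:
  assumes "symd d" "x \<in> basis d S" "T = ps ` S"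
  shows "fs x \<in> basis d T"
proof -
  have i1: "ps l \<in> S" if "l \<in> ps ` S" for l using that by auto
  have i2: "l \<in> ps ` S" if "ps l \<in> S" for l using that by (intro image_eqI[where x = "ps l"]) simp_all
  show ?thesis unfolding basis_iff fs_def
  proof (intro allI conjI impI)
    fix l assume "l \<in> T"
    then have "ps l \<in> S" using i1 assms(3) by blast
    then show "x (ps l) < d l" using assms(1,2) unfolding symd_def basis_iff by metis
  next
    fix l assume "l \<notin> T"
    then have "ps l \<notin> S" using i2 assms(3) by blast
    then show "x (ps l) = 0" using assms(2) unfolding basis_iff by blast
  qed
qed

lemma fs_bij:
  assumes "symd d" "T = ps ` S"
  shows "bij_betw fs (basis d S) (basis d T)"
proof (rule bij_betwI[where g = fs])
  have S: "S = ps ` T" using assms(2) by (simp add: image_image)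
  show "fs \<in> basis d S \<rightarrow> basis d T" using fs_basis[OF assms(1) _ assms(2)] by auto
  show "fs \<in> basis d T \<rightarrow> basis d S" using fs_basis[OF assms(1) _ S] by auto
qed auto

lemma fs_inj: "fs x = fs y \<Longrightarrow> x = y" by (metis fs_fs)

lemma unitary_adj:
  assumes U: "is_unitary d X Y U" and sd: "symd d" and XY: "Y = ps ` X" and c: "cmod c = 1"
  shows "is_unitary d X Y (\<lambda>y x. c * cnj (U (fs x) (fs y)))"
proof -
  have YX: "X = ps ` Y" using XY by (simp add: image_image)
  have bXY: "bij_betw fs (basis d X) (basis d Y)" by (rule fs_bij[OF sd XY])
  have bYX: "bij_betw fs (basis d Y) (basis d X)" by (rule fs_bij[OF sd YX])
  have "c * cnj c = of_real ((cmod c)^2)" by (rule complex_norm_square[symmetric])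
  then have cc: "cnj c * c = 1" using c by (simp add: mult.commute)
  have m1: "cnj (c * cnj p) * (c * cnj q) = p * cnj q" for p q
  proof -
    have "cnj (c * cnj p) * (c * cnj q) = (cnj c * c) * (p * cnj q)" by (simp add: ac_simps)
    then show ?thesis using cc by simp
  qed
  have m2: "c * cnj p * cnj (c * cnj q) = cnj p * q" for p q
  proof -
    have "c * cnj p * cnj (c * cnj q) = (cnj c * c) * (cnj p * q)" by (simp add: ac_simps)
    then show ?thesis using cc by simp
  qed
  have idfs: "id_op (fs x) (fs x') = id_op x x'" for x x' unfolding id_op_def using fs_inj by auto
  show ?thesis unfolding is_unitary_def
  proof (intro conjI ballI)
    fix x x' assume x: "x \<in> basis d X" and x': "x' \<in> basis d X"
    have "(\<Sum>y\<in>basis d Y. cnj (c * cnj (U (fs x) (fs y))) * (c * cnj (U (fs x') (fs y))))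
        = (\<Sum>y\<in>basis d Y. U (fs x) (fs y) * cnj (U (fs x') (fs y)))"
      by (intro sum.cong refl) (rule m1)
    also have "\<dots> = (\<Sum>z\<in>basis d X. U (fs x) z * cnj (U (fs x') z))"
      by (rule sum.reindex_bij_betw[OF bYX, where g = "\<lambda>z. U (fs x) z * cnj (U (fs x') z)"])
    also have "\<dots> = id_op (fs x) (fs x')"
      using U fs_basis[OF sd x XY] fs_basis[OF sd x' XY] unfolding is_unitary_def by blast
    finally show "(\<Sum>y\<in>basis d Y. cnj (c * cnj (U (fs x) (fs y))) * (c * cnj (U (fs x') (fs y)))) = id_op x x'"
      using idfs by simp
  next
    fix y y' assume y: "y \<in> basis d Y" and y': "y' \<in> basis d Y"
    have "(\<Sum>x\<in>basis d X. c * cnj (U (fs x) (fs y)) * cnj (c * cnj (U (fs x) (fs y'))))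
        = (\<Sum>x\<in>basis d X. cnj (U (fs x) (fs y)) * U (fs x) (fs y'))"
      by (intro sum.cong refl) (rule m2)
    also have "\<dots> = (\<Sum>z\<in>basis d Y. cnj (U z (fs y)) * U z (fs y'))"
      by (rule sum.reindex_bij_betw[OF bXY, where g = "\<lambda>z. cnj (U z (fs y)) * U z (fs y')"])
    also have "\<dots> = id_op (fs y) (fs y')"
      using U fs_basis[OF sd y YX] fs_basis[OF sd y' YX] unfolding is_unitary_def by blast
    finally show "(\<Sum>x\<in>basis d X. c * cnj (U (fs x) (fs y)) * cnj (c * cnj (U (fs x) (fs y')))) = id_op y y'"
      using idfs by simp
  qed
qed

lemma phase_lemma:
  assumes ab: "\<forall>x\<in>B. \<forall>y\<in>B. a x * cnj (a y) = b x * cnj (b y)" and x0: "x0 \<in> B" and nz: "b x0 \<noteq> 0"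
  shows "\<exists>c. cmod c = 1 \<and> (\<forall>x\<in>B. a x = c * b x)"
proof -
  have e0: "a x0 * cnj (a x0) = b x0 * cnj (b x0)" using ab x0 by blast
  have an: "a x0 \<noteq> 0" using e0 nz by auto
  define c where "c = a x0 / b x0"
  have "of_real ((cmod (a x0))^2) = (of_real ((cmod (b x0))^2) :: complex)"
    unfolding complex_norm_square using e0 .
  then have "(cmod (a x0))^2 = (cmod (b x0))^2" by (simp only: of_real_eq_iff)
  then have "cmod (a x0) = cmod (b x0)" using power2_eq_iff_nonneg[of "cmod (a x0)" "cmod (b x0)"] by simp
  then have c1: "cmod c = 1" using nz by (simp add: c_def norm_divide)
  have "a x = c * b x" if x: "x \<in> B" for x
  proof -
    have "a x * cnj (a x0) = b x * cnj (b x0)" using ab x x0 by blast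
    then have h1: "a x = b x * cnj (b x0) / cnj (a x0)" using an by (simp add: eq_divide_eq)
    have h2: "cnj (b x0) / cnj (a x0) = c" unfolding c_def using e0 an nz by (subst frac_eq_eq) (auto simp: mult.commute)
    show ?thesis using h1 h2 by (metis mult.commute times_divide_eq_right)
  qed
  then show ?thesis using c1 by blast
qed

lemma choi_uchan:
  assumes "a \<in> basis d (X \<union> Y)" "b \<in> basis d (X \<union> Y)"
  shows "choi X Y (uchan d X U) a b = dket X Y U a * cnj (dket X Y U b)"
proof -
  have ra: "restr X a \<in> basis d X" and rb: "restr X b \<in> basis d X" using assms by (auto intro: restr_in_basis)
  have "choi X Y (uchan d X U) a b = (\<Sum>x\<in>basis d X. \<Sum>x'\<in>basis d X. (if x = restr X a then 1 else 0) *
      ((if x' = restr X b then 1 else 0) * (U (restr Y a) x * cnj (U (restr Y b) x'))))"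
    unfolding choi_def uchan_def unit_op_def by (intro sum.cong refl) auto
  also have "\<dots> = U (restr Y a) (restr X a) * cnj (U (restr Y b) (restr X b))"
    by (simp add: sum_delta_basis[OF ra] sum_distrib_left[symmetric] sum_delta_basis[OF rb])
  finally show ?thesis by (simp add: dket_def)
qed

lemma unitary_choi_iff:
  "is_unitary_choi d X Y J \<longleftrightarrow> (\<exists>U. is_unitary d X Y U \<and>
      (\<forall>a\<in>basis d (X \<union> Y). \<forall>b\<in>basis d (X \<union> Y). J a b = dket X Y U a * cnj (dket X Y U b)))"
  unfolding is_unitary_choi_def op_eq_def by (auto simp: choi_uchan)

lemma dket_nonzero:
  assumes U: "is_unitary d X Y U" and x0: "x0 \<in> basis d X" and XY: "X \<inter> Y = {}"
  shows "\<exists>p\<in>basis d (X \<union> Y). dket X Y U p \<noteq> 0"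
proof (rule ccontr)
  assume "\<not> ?thesis"
  then have z: "dket X Y U p = 0" if "p \<in> basis d (X \<union> Y)" for p using that by blast
  have "(\<Sum>y\<in>basis d Y. cnj (U y x0) * U y x0) = 1" using U x0 unfolding is_unitary_def id_op_def by auto
  moreover have "U y x0 = 0" if y: "y \<in> basis d Y" for y
  proof -
    have "join X x0 y \<in> basis d (X \<union> Y)" by (rule join_in_basis[OF x0 y XY])
    moreover have "restr Y (join X x0 y) = y" "restr X (join X x0 y) = x0"
      using x0 y XY by (auto simp: restr_def join_def basis_def fun_eq_iff)
    ultimately show ?thesis using z unfolding dket_def by metis
  qed
  ultimately show False by simp
qed

lemma link_out_pure:
  assumes s: "s \<in> basis d {P, F, AI', AO', BI', BO'}" and t: "t \<in> basis d {P, F, AI', AO', BI', BO'}"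
  shows "link_out d (proj w) (proj (dket {AI, AI'} {AO, AO'} U)) (proj (dket {BI, BI'} {BO, BO'} V)) s t =
     contr d w (dket {AI, AI'} {AO, AO'} U) (dket {BI, BI'} {BO, BO'} V) s *
     cnj (contr d w (dket {AI, AI'} {AO, AO'} U) (dket {BI, BI'} {BO, BO'} V) t)"
  using link_out_kraus[OF s t, of "{0::nat}" "{0::nat}" "proj (dket {AI, AI'} {AO, AO'} U)" "\<lambda>_. dket {AI, AI'} {AO, AO'} U"
      "proj (dket {BI, BI'} {BO, BO'} V)" "\<lambda>_. dket {BI, BI'} {BO, BO'} V" w]
  by (simp add: proj_def)

lemma ps_Z: "ps ` {AI, AO, BI, BO} = {AI, AO, BI, BO}" by auto

lemma contr_rev:
  assumes sd: "symd d"
  shows "contr d (w_rev w) (dket {AI, AI'} {AO, AO'} U) (dket {BI, BI'} {BO, BO'} V) s =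
    cnj (contr d w (dket {AI, AI'} {AO, AO'} (\<lambda>y x. cnj (U (fs x) (fs y))))
                   (dket {BI, BI'} {BO, BO'} (\<lambda>y x. cnj (V (fs x) (fs y)))) (fs s))"
proof -
  define Z where "Z = {AI, AO, BI, BO}"
  have bij: "bij_betw fs (basis d Z) (basis d Z)" using fs_bij[OF sd ps_Z[symmetric]] unfolding Z_def .
  have "contr d w (dket {AI, AI'} {AO, AO'} (\<lambda>y x. cnj (U (fs x) (fs y))))
                   (dket {BI, BI'} {BO, BO'} (\<lambda>y x. cnj (V (fs x) (fs y)))) (fs s)
     = (\<Sum>z\<in>basis d Z. w (restr mainS (join Z (fs z) (fs s))) *
          dket {AI, AI'} {AO, AO'} (\<lambda>y x. cnj (U (fs x) (fs y))) (restr {AI, AI', AO, AO'} (join Z (fs z) (fs s))) *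
          dket {BI, BI'} {BO, BO'} (\<lambda>y x. cnj (V (fs x) (fs y))) (restr {BI, BI', BO, BO'} (join Z (fs z) (fs s))))"
    unfolding contr_def Z_def[symmetric]
    by (rule sum.reindex_bij_betw[OF bij, symmetric])
  also have "\<dots> = (\<Sum>z\<in>basis d Z. cnj (w_rev w (restr mainS (join Z z s)) *
          dket {AI, AI'} {AO, AO'} U (restr {AI, AI', AO, AO'} (join Z z s)) *
          dket {BI, BI'} {BO, BO'} V (restr {BI, BI', BO, BO'} (join Z z s))))"
  proof (rule sum.cong[OF refl])
    fix z
    have e1: "swap_idx (restr mainS (join Z z s)) = restr mainS (join Z (fs z) (fs s))"
      by (simp add: party_fun_eq_iff swap_idx_def restr_def join_def fs_def mainS_def Z_def)
    have e2: "fs (restr {AI, AI'} (restr {AI, AI', AO, AO'} (join Z (fs z) (fs s)))) = restr {AO, AO'} (restr {AI, AI', AO, AO'} (join Z z s))"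
      by (simp add: party_fun_eq_iff restr_def join_def fs_def Z_def)
    have e3: "fs (restr {AO, AO'} (restr {AI, AI', AO, AO'} (join Z (fs z) (fs s)))) = restr {AI, AI'} (restr {AI, AI', AO, AO'} (join Z z s))"
      by (simp add: party_fun_eq_iff restr_def join_def fs_def Z_def)
    have e4: "fs (restr {BI, BI'} (restr {BI, BI', BO, BO'} (join Z (fs z) (fs s)))) = restr {BO, BO'} (restr {BI, BI', BO, BO'} (join Z z s))"
      by (simp add: party_fun_eq_iff restr_def join_def fs_def Z_def)
    have e5: "fs (restr {BO, BO'} (restr {BI, BI', BO, BO'} (join Z (fs z) (fs s)))) = restr {BI, BI'} (restr {BI, BI', BO, BO'} (join Z z s))"
      by (simp add: party_fun_eq_iff restr_def join_def fs_def Z_def)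
    show "w (restr mainS (join Z (fs z) (fs s))) *
          dket {AI, AI'} {AO, AO'} (\<lambda>y x. cnj (U (fs x) (fs y))) (restr {AI, AI', AO, AO'} (join Z (fs z) (fs s))) *
          dket {BI, BI'} {BO, BO'} (\<lambda>y x. cnj (V (fs x) (fs y))) (restr {BI, BI', BO, BO'} (join Z (fs z) (fs s)))
       = cnj (w_rev w (restr mainS (join Z z s)) *
          dket {AI, AI'} {AO, AO'} U (restr {AI, AI', AO, AO'} (join Z z s)) *
          dket {BI, BI'} {BO, BO'} V (restr {BI, BI', BO, BO'} (join Z z s)))"
      unfolding dket_def w_rev_def e1 e2 e3 e4 e5 by simp
  qed
  finally have h: "contr d w (dket {AI, AI'} {AO, AO'} (\<lambda>y x. cnj (U (fs x) (fs y))))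
                   (dket {BI, BI'} {BO, BO'} (\<lambda>y x. cnj (V (fs x) (fs y)))) (fs s)
     = (\<Sum>z\<in>basis d Z. cnj (w_rev w (restr mainS (join Z z s)) *
          dket {AI, AI'} {AO, AO'} U (restr {AI, AI', AO, AO'} (join Z z s)) *
          dket {BI, BI'} {BO, BO'} V (restr {BI, BI', BO, BO'} (join Z z s))))" .
  show ?thesis unfolding h cnj_sum complex_cnj_cnj unfolding contr_def Z_def ..
qed

lemma symd_anc:
  assumes "d AI = d AO" "d BI = d BO" "d P = d F"
  shows "symd (anc_dims d a a b b)"
  unfolding symd_def anc_dims_def
proof
  fix l show "(d(AI' := a, AO' := a, BI' := b, BO' := b)) (ps l) = (d(AI' := a, AO' := a, BI' := b, BO' := b)) l"
    using assms by (cases l) auto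
qed

lemma zero_basis: "(\<forall>l\<in>S. 1 \<le> d l) \<Longrightarrow> (\<lambda>_. 0) \<in> basis d S"
  by (auto simp: basis_def)

lemma pure_rev:
  assumes dpos: "\<forall>l\<in>mainS. 1 \<le> d l" and dA: "d AI = d AO" and dB: "d BI = d BO" and dP: "d P = d F"
    and pure: "is_pure d (proj w)"
  shows "is_pure d (proj (w_rev w))"
  unfolding is_pure_def
proof (intro allI impI)
  fix a1 a2 b1 b2 U V
  assume c: "1 \<le> a1 \<and> 1 \<le> a2 \<and> 1 \<le> b1 \<and> 1 \<le> b2 \<and>
        d AI * a1 = d AO * a2 \<and> d BI * b1 = d BO * b2 \<and> d P * a1 * b1 = d F * a2 * b2"
  assume UV: "is_unitary (anc_dims d a1 a2 b1 b2) {AI, AI'} {AO, AO'} U \<and>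
          is_unitary (anc_dims d a1 a2 b1 b2) {BI, BI'} {BO, BO'} V"
  have dAI: "1 \<le> d AI" "1 \<le> d BI" "1 \<le> d P" using dpos by (auto simp: mainS_def)
  have a12: "a2 = a1" using c dA dAI by auto
  have b12: "b2 = b1" using c dB dAI by auto
  define d' where "d' = anc_dims d a1 a1 b1 b1"
  have sd: "symd d'" unfolding d'_def by (rule symd_anc[OF dA dB dP])
  have U: "is_unitary d' {AI, AI'} {AO, AO'} U" and V: "is_unitary d' {BI, BI'} {BO, BO'} V"
    using UV unfolding d'_def a12 b12 by auto
  define Ud where "Ud = (\<lambda>y x. cnj (U (fs x) (fs y)))"
  define Vd where "Vd = (\<lambda>y x. cnj (V (fs x) (fs y)))"
  have Ud: "is_unitary d' {AI, AI'} {AO, AO'} Ud" unfolding Ud_def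
    using unitary_adj[OF U sd _, of 1] by simp
  have Vd: "is_unitary d' {BI, BI'} {BO, BO'} Vd" unfolding Vd_def
    using unitary_adj[OF V sd _, of 1] by simp
  have "is_unitary_choi d' {P, AI', BI'} {F, AO', BO'}
            (link_out d' (proj w) (proj (dket {AI, AI'} {AO, AO'} Ud)) (proj (dket {BI, BI'} {BO, BO'} Vd)))"
    using pure c Ud Vd unfolding is_pure_def d'_def a12 b12 by blast
  then obtain X0 where X0: "is_unitary d' {P, AI', BI'} {F, AO', BO'} X0"
    and X0e: "\<forall>a\<in>basis d' {P, F, AI', AO', BI', BO'}. \<forall>b\<in>basis d' {P, F, AI', AO', BI', BO'}.
       link_out d' (proj w) (proj (dket {AI, AI'} {AO, AO'} Ud)) (proj (dket {BI, BI'} {BO, BO'} Vd)) a b =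
       dket {P, AI', BI'} {F, AO', BO'} X0 a * cnj (dket {P, AI', BI'} {F, AO', BO'} X0 b)"
    unfolding unitary_choi_iff by (auto simp: insert_commute)
  define B where "B = basis d' {P, F, AI', AO', BI', BO'}"
  define v where "v = contr d' w (dket {AI, AI'} {AO, AO'} Ud) (dket {BI, BI'} {BO, BO'} Vd)"
  have vv: "\<forall>a\<in>B. \<forall>b\<in>B. v a * cnj (v b) = dket {P, AI', BI'} {F, AO', BO'} X0 a * cnj (dket {P, AI', BI'} {F, AO', BO'} X0 b)"
    using X0e link_out_pure unfolding B_def v_def by metis
  have "(\<lambda>_. 0) \<in> basis d' {P, AI', BI'}" using dAI c unfolding d'_def anc_dims_def by (intro zero_basis) auto
  then obtain x0 where x0: "x0 \<in> B" and nz: "dket {P, AI', BI'} {F, AO', BO'} X0 x0 \<noteq> 0"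
    using dket_nonzero[OF X0] unfolding B_def by (fastforce simp: insert_commute)
  obtain ph where ph: "cmod ph = 1" and vph: "\<forall>x\<in>B. v x = ph * dket {P, AI', BI'} {F, AO', BO'} X0 x"
    using phase_lemma[where B = B and a = v and b = "dket {P, AI', BI'} {F, AO', BO'} X0" ] vv x0 nz by blast
  define X1 where "X1 = (\<lambda>y x. cnj ph * cnj (X0 (fs x) (fs y)))"
  have X1: "is_unitary d' {P, AI', BI'} {F, AO', BO'} X1"
    unfolding X1_def using unitary_adj[OF X0 sd _, of "cnj ph"] ph by simp
  have psO: "{P, F, AI', AO', BI', BO'} = ps ` {P, F, AI', AO', BI', BO'}" by auto
  have fsB: "fs a \<in> B" if "a \<in> B" for a using fs_basis[OF sd that[unfolded B_def] psO] unfolding B_def .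
  have vr: "contr d' (w_rev w) (dket {AI, AI'} {AO, AO'} U) (dket {BI, BI'} {BO, BO'} V) a = dket {P, AI', BI'} {F, AO', BO'} X1 a"
    if a: "a \<in> B" for a
  proof -
    have "contr d' (w_rev w) (dket {AI, AI'} {AO, AO'} U) (dket {BI, BI'} {BO, BO'} V) a = cnj (v (fs a))"
      unfolding v_def Ud_def Vd_def by (rule contr_rev[OF sd])
    also have "\<dots> = cnj (ph * dket {P, AI', BI'} {F, AO', BO'} X0 (fs a))" using vph fsB[OF a] by simp
    also have "\<dots> = dket {P, AI', BI'} {F, AO', BO'} X1 a"
    proof -
      have "fs (restr {P, AI', BI'} a) = restr {F, AO', BO'} (fs a)" "fs (restr {F, AO', BO'} a) = restr {P, AI', BI'} (fs a)"
        by (simp_all add: party_fun_eq_iff restr_def fs_def)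
      then show ?thesis unfolding dket_def X1_def by simp
    qed
    finally show ?thesis .
  qed
  show "is_unitary_choi (anc_dims d a1 a2 b1 b2) {P, AI', BI'} {F, AO', BO'}
          (link_out (anc_dims d a1 a2 b1 b2) (proj (w_rev w))
            (proj (dket {AI, AI'} {AO, AO'} U)) (proj (dket {BI, BI'} {BO, BO'} V)))"
    unfolding a12 b12 d'_def[symmetric] unitary_choi_iff
  proof (intro exI conjI ballI)
    show "is_unitary d' {P, AI', BI'} {F, AO', BO'} X1" by (rule X1)
    fix a b assume a: "a \<in> basis d' ({P, AI', BI'} \<union> {F, AO', BO'})" and b: "b \<in> basis d' ({P, AI', BI'} \<union> {F, AO', BO'})"
    have a': "a \<in> B" and b': "b \<in> B" using a b unfolding B_def by (auto simp: insert_commute)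
    show "link_out d' (proj (w_rev w)) (proj (dket {AI, AI'} {AO, AO'} U)) (proj (dket {BI, BI'} {BO, BO'} V)) a b =
         dket {P, AI', BI'} {F, AO', BO'} X1 a * cnj (dket {P, AI', BI'} {F, AO', BO'} X1 b)"
      using link_out_pure[OF a'[unfolded B_def] b'[unfolded B_def]] vr[OF a'] vr[OF b'] by simp
  qed
qed

lemma sum_ind_l: "finite A \<Longrightarrow> (\<Sum>b\<in>A. (if a = b then 1 else 0) * f b) = (if a \<in> A then f a else (0::complex))"
proof -
  assume "finite A"
  have "(\<Sum>b\<in>A. (if a = b then 1 else 0) * f b) = (\<Sum>b\<in>A. if a = b then f b else 0)" by (rule sum.cong) auto
  then show ?thesis using \<open>finite A\<close> by (simp add: sum.delta)
qed

lemma sum_ind_r: "finite A \<Longrightarrow> (\<Sum>b\<in>A. f b * (if b = a then 1 else 0)) = (if a \<in> A then f a else (0::complex))"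
proof -
  assume "finite A"
  have "(\<Sum>b\<in>A. f b * (if b = a then 1 else 0)) = (\<Sum>b\<in>A. if a = b then f b else 0)" by (rule sum.cong) auto
  then show ?thesis using \<open>finite A\<close> by (simp add: sum.delta)
qed

lemma sum_ind_lr: "finite A \<Longrightarrow> (\<Sum>b\<in>A. (if b = a then 1 else 0) * f b) = (if a \<in> A then f a else (0::complex))"
proof -
  assume "finite A"
  have "(\<Sum>b\<in>A. (if b = a then 1 else 0) * f b) = (\<Sum>b\<in>A. if a = b then f b else 0)" by (rule sum.cong) auto
  then show ?thesis using \<open>finite A\<close> by (simp add: sum.delta)
qed

lemma sum_swap3: "(\<Sum>q\<in>C. \<Sum>a\<in>A. \<Sum>b\<in>B. f q a b) = (\<Sum>a\<in>A. \<Sum>b\<in>B. \<Sum>q\<in>C. (f q a b :: complex))"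
proof -
  have "(\<Sum>q\<in>C. \<Sum>a\<in>A. \<Sum>b\<in>B. f q a b) = (\<Sum>a\<in>A. \<Sum>q\<in>C. \<Sum>b\<in>B. f q a b)" by (rule sum.swap)
  also have "\<dots> = (\<Sum>a\<in>A. \<Sum>b\<in>B. \<Sum>q\<in>C. f q a b)" by (rule sum.cong[OF refl]) (rule sum.swap)
  finally show ?thesis .
qed

locale halmos =
  fixes I :: "'i set" and Ot :: "'q set" and ren :: "'i \<Rightarrow> 'q" and A :: "'i set" and V :: "'q \<Rightarrow> 'i \<Rightarrow> complex"
  assumes finI: "finite I" and finO: "finite Ot" and bij: "bij_betw ren I Ot" and AI: "A \<subseteq> I"
    and iso: "\<forall>a1\<in>A. \<forall>a2\<in>A. (\<Sum>q\<in>Ot - ren ` A. cnj (V q a1) * V q a2) = (if a1 = a2 then 1 else 0)"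
begin

definition Bo where "Bo = Ot - ren ` A"
definition iv where "iv = inv_into I ren"
definition PP where "PP q o' = (\<Sum>a\<in>A. V q a * cnj (V o' a))"

definition H where "H q i = (if i \<in> A then (if q \<in> Bo then V q i else 0)
   else (if q \<in> Bo then (if q = ren i then 1 else 0) - PP q (ren i) else cnj (V (ren i) (iv q))))"

lemma finA: "finite A" using finI AI finite_subset by blast
lemma finBo: "finite Bo" using finO by (simp add: Bo_def)
lemma iso': "a1 \<in> A \<Longrightarrow> a2 \<in> A \<Longrightarrow> (\<Sum>q\<in>Bo. cnj (V q a1) * V q a2) = (if a1 = a2 then 1 else 0)"
  using iso by (simp add: Bo_def)
lemma inj: "inj_on ren I" using bij by (simp add: bij_betw_def)
lemma ren_in: "i \<in> I \<Longrightarrow> ren i \<in> Ot" using bij by (auto simp: bij_betw_def)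
lemma iv_ren: "i \<in> I \<Longrightarrow> iv (ren i) = i" using inj by (simp add: iv_def)
lemma ren_iv: "q \<in> Ot \<Longrightarrow> ren (iv q) = q" using bij by (simp add: iv_def bij_betw_def f_inv_into_f)
lemma iv_in: "q \<in> Ot \<Longrightarrow> iv q \<in> I" using bij by (auto simp: iv_def bij_betw_def inv_into_into)
lemma ren_notA: "i \<in> I \<Longrightarrow> i \<notin> A \<Longrightarrow> ren i \<in> Bo"
  using inj AI ren_in by (auto simp: Bo_def inj_on_def)
lemma ren_A: "i \<in> A \<Longrightarrow> ren i \<notin> Bo" by (simp add: Bo_def)
lemma iv_Bo: "q \<in> Bo \<Longrightarrow> iv q \<notin> A" using ren_iv by (force simp: Bo_def)
lemma iv_nBo: "q \<in> Ot \<Longrightarrow> q \<notin> Bo \<Longrightarrow> iv q \<in> A" using iv_ren AI by (auto simp: Bo_def)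

lemma sum_O: "(\<Sum>q\<in>Ot. f q) = (\<Sum>q\<in>Bo. f q) + (\<Sum>a\<in>A. f (ren a))"
proof -
  have Ot: "Ot = Bo \<union> ren ` A" using AI ren_in by (auto simp: Bo_def)
  have "(\<Sum>q\<in>Ot. f q) = (\<Sum>q\<in>Bo \<union> ren ` A. f q)" by (rule sum.cong[OF Ot]) simp
  also have "\<dots> = (\<Sum>q\<in>Bo. f q) + (\<Sum>q\<in>ren ` A. f q)"
    by (rule sum.union_disjoint) (auto simp: finO finA Bo_def)
  also have "(\<Sum>q\<in>ren ` A. f q) = (\<Sum>a\<in>A. f (ren a))"
    using inj AI by (simp add: sum.reindex inj_on_subset)
  finally show ?thesis .
qed

lemma PP_cnj: "cnj (PP q o') = PP o' q" unfolding PP_def cnj_sum by (simp add: mult.commute)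

lemma PP_proj: "(\<Sum>q\<in>Bo. PP o1 q * PP q o2) = PP o1 o2"
proof -
  have "(\<Sum>q\<in>Bo. PP o1 q * PP q o2) = (\<Sum>q\<in>Bo. \<Sum>a\<in>A. \<Sum>b\<in>A. V o1 a * (cnj (V q a) * V q b) * cnj (V o2 b))"
    unfolding PP_def sum_product by (intro sum.cong refl) (simp add: ac_simps)
  also have "\<dots> = (\<Sum>a\<in>A. \<Sum>b\<in>A. \<Sum>q\<in>Bo. V o1 a * (cnj (V q a) * V q b) * cnj (V o2 b))"
    by (rule sum_swap3)
  also have "\<dots> = (\<Sum>a\<in>A. \<Sum>b\<in>A. V o1 a * (\<Sum>q\<in>Bo. cnj (V q a) * V q b) * cnj (V o2 b))"
    by (simp add: sum_distrib_left sum_distrib_right)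
  also have "\<dots> = (\<Sum>a\<in>A. \<Sum>b\<in>A. V o1 a * (if a = b then 1 else 0) * cnj (V o2 b))"
    using iso' by (intro sum.cong refl) simp
  also have "\<dots> = (\<Sum>a\<in>A. V o1 a * cnj (V o2 a))"
  proof (rule sum.cong[OF refl])
    fix a assume "a \<in> A"
    have "(\<Sum>b\<in>A. V o1 a * (if a = b then 1 else 0) * cnj (V o2 b)) = V o1 a * (\<Sum>b\<in>A. (if a = b then 1 else 0) * cnj (V o2 b))"
      by (simp add: sum_distrib_left mult.assoc)
    then show "(\<Sum>b\<in>A. V o1 a * (if a = b then 1 else 0) * cnj (V o2 b)) = V o1 a * cnj (V o2 a)"
      using sum_ind_l[OF finA] \<open>a \<in> A\<close> by simp
  qed
  also have "\<dots> = PP o1 o2" unfolding PP_def ..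
  finally show ?thesis .
qed

lemma PP_V: "a \<in> A \<Longrightarrow> (\<Sum>q\<in>Bo. cnj (V q a) * PP q r) = cnj (V r a)"
proof -
  assume a: "a \<in> A"
  have "(\<Sum>q\<in>Bo. cnj (V q a) * PP q r) = (\<Sum>b\<in>A. (\<Sum>q\<in>Bo. cnj (V q a) * V q b) * cnj (V r b))"
    unfolding PP_def sum_distrib_left sum_distrib_right by (subst sum.swap) (simp add: ac_simps)
  also have "\<dots> = (\<Sum>b\<in>A. (if a = b then 1 else 0) * cnj (V r b))" using iso' a by simp
  also have "\<dots> = cnj (V r a)" using sum_ind_l[OF finA] a by simp
  finally show ?thesis .
qed

lemma col_orth:
  assumes i1: "i1 \<in> I" and i2: "i2 \<in> I"
  shows "(\<Sum>q\<in>Ot. cnj (H q i1) * H q i2) = (if i1 = i2 then 1 else 0)"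
proof (cases "i1 \<in> A")
  case A1: True
  show ?thesis
  proof (cases "i2 \<in> A")
    case True
    have "(\<Sum>q\<in>Ot. cnj (H q i1) * H q i2) = (\<Sum>q\<in>Bo. cnj (V q i1) * V q i2)"
      unfolding sum_O H_def using A1 True by (simp add: ren_A)
    then show ?thesis using iso' A1 True by simp
  next
    case False
    have r2: "ren i2 \<in> Bo" using ren_notA[OF i2 False] .
    have "(\<Sum>q\<in>Ot. cnj (H q i1) * H q i2) = (\<Sum>q\<in>Bo. cnj (V q i1) * ((if q = ren i2 then 1 else 0) - PP q (ren i2)))"
      unfolding sum_O H_def using A1 False by (simp add: ren_A)
    also have "\<dots> = cnj (V (ren i2) i1) - (\<Sum>q\<in>Bo. cnj (V q i1) * PP q (ren i2))"
      using r2 sum_ind_r[OF finBo] by (simp add: right_diff_distrib sum_subtractf)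
    also have "\<dots> = 0" using PP_V[OF A1] by simp
    finally show ?thesis using A1 False by auto
  qed
next
  case A1: False
  have r1: "ren i1 \<in> Bo" using ren_notA[OF i1 A1] .
  show ?thesis
  proof (cases "i2 \<in> A")
    case True
    have "(\<Sum>q\<in>Ot. cnj (H q i1) * H q i2) = (\<Sum>q\<in>Bo. cnj ((if q = ren i1 then 1 else 0) - PP q (ren i1)) * V q i2)"
      unfolding sum_O H_def using A1 True by (simp add: ren_A)
    also have "\<dots> = (\<Sum>q\<in>Bo. (if q = ren i1 then 1 else 0) * V q i2) - (\<Sum>q\<in>Bo. PP (ren i1) q * V q i2)"
      unfolding sum_subtractf[symmetric] by (intro sum.cong refl) (simp add: PP_cnj left_diff_distrib)
    also have "(\<Sum>q\<in>Bo. (if q = ren i1 then 1 else 0) * V q i2) = V (ren i1) i2"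
      using r1 sum_ind_lr[OF finBo] by simp
    also have "(\<Sum>q\<in>Bo. PP (ren i1) q * V q i2) = V (ren i1) i2"
    proof -
      have "cnj (\<Sum>q\<in>Bo. cnj (V q i2) * PP q (ren i1)) = cnj (cnj (V (ren i1) i2))" using PP_V[OF True] by simp
      then show ?thesis unfolding cnj_sum by (simp add: PP_cnj mult.commute)
    qed
    finally show ?thesis using A1 True by auto
  next
    case A2: False
    have r2: "ren i2 \<in> Bo" using ren_notA[OF i2 A2] .
    have ivA: "(\<Sum>a\<in>A. V (ren i1) (iv (ren a)) * cnj (V (ren i2) (iv (ren a)))) = (\<Sum>a\<in>A. V (ren i1) a * cnj (V (ren i2) a))"
      by (rule sum.cong) (use iv_ren AI in auto)
    have "(\<Sum>q\<in>Ot. cnj (H q i1) * H q i2) =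
       (\<Sum>q\<in>Bo. cnj ((if q = ren i1 then 1 else 0) - PP q (ren i1)) * ((if q = ren i2 then 1 else 0) - PP q (ren i2)))
       + (\<Sum>a\<in>A. V (ren i1) a * cnj (V (ren i2) a))"
      unfolding sum_O H_def using A1 A2 ivA by (simp add: ren_A)
    also have "(\<Sum>a\<in>A. V (ren i1) a * cnj (V (ren i2) a)) = PP (ren i1) (ren i2)" by (simp add: PP_def)
    also have "(\<Sum>q\<in>Bo. cnj ((if q = ren i1 then 1 else 0) - PP q (ren i1)) * ((if q = ren i2 then 1 else 0) - PP q (ren i2)))
       = (\<Sum>q\<in>Bo. (if q = ren i1 then 1 else 0) * (if q = ren i2 then 1 else 0)
            - (if q = ren i1 then 1 else 0) * PP q (ren i2) - PP (ren i1) q * (if q = ren i2 then 1 else 0)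
            + PP (ren i1) q * PP q (ren i2))"
      by (intro sum.cong refl) (simp add: PP_cnj algebra_simps)
    also have "\<dots> = (if ren i1 = ren i2 then 1 else 0) - PP (ren i1) (ren i2) - PP (ren i1) (ren i2) + PP (ren i1) (ren i2)"
      using r1 r2 sum_ind_lr[OF finBo] sum_ind_r[OF finBo] unfolding sum.distrib sum_subtractf PP_proj
      by simp
    finally have "(\<Sum>q\<in>Ot. cnj (H q i1) * H q i2) = (if ren i1 = ren i2 then 1 else 0)" by simp
    moreover have "ren i1 = ren i2 \<longleftrightarrow> i1 = i2" using inj i1 i2 by (auto simp: inj_on_def)
    ultimately show ?thesis by simp
  qed
qed

lemma H_herm:
  assumes q: "q \<in> Ot" and i: "i \<in> I"
  shows "H q i = cnj (H (ren i) (iv q))"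
proof (cases "i \<in> A")
  case True
  then show ?thesis
  proof (cases "q \<in> Bo")
    case True
    then show ?thesis using \<open>i \<in> A\<close> iv_Bo[OF True] ren_iv q iv_ren i by (simp add: H_def ren_A)
  next
    case False
    then show ?thesis using \<open>i \<in> A\<close> iv_nBo[OF q False] by (simp add: H_def ren_A)
  qed
next
  case nA: False
  have ri: "ren i \<in> Bo" using ren_notA[OF i nA] .
  show ?thesis
  proof (cases "q \<in> Bo")
    case True
    have "iv q \<notin> A" using iv_Bo[OF True] .
    then show ?thesis using nA True ri ren_iv[OF q] by (auto simp: H_def PP_cnj)
  next
    case False
    then show ?thesis using nA ri iv_nBo[OF q False] by (simp add: H_def)
  qed
qed

lemma row_orth:
  assumes o1: "o1 \<in> Ot" and o2: "o2 \<in> Ot"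
  shows "(\<Sum>i\<in>I. H o1 i * cnj (H o2 i)) = (if o1 = o2 then 1 else 0)"
proof -
  have "(\<Sum>i\<in>I. H o1 i * cnj (H o2 i)) = (\<Sum>i\<in>I. cnj (H (ren i) (iv o1)) * H (ren i) (iv o2))"
    using H_herm o1 o2 by (intro sum.cong refl) simp
  also have "\<dots> = (\<Sum>q\<in>Ot. cnj (H q (iv o1)) * H q (iv o2))"
    by (rule sum.reindex_bij_betw[OF bij, where g = "\<lambda>q. cnj (H q (iv o1)) * H q (iv o2)"])
  also have "\<dots> = (if iv o1 = iv o2 then 1 else 0)" by (rule col_orth[OF iv_in[OF o1] iv_in[OF o2]])
  also have "(iv o1 = iv o2) = (o1 = o2)" using ren_iv o1 o2 by metis
  finally show ?thesis .
qed

end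

lemma sum_lt_block:
  assumes "b \<le> (c::nat)"
  shows "(\<Sum>j<c. if j < b then g j else 0) = (\<Sum>j<b. (g j :: complex))"
proof -
  have "(\<Sum>j<c. if j < b then g j else 0) = (\<Sum>j\<in>{j \<in> {..<c}. j < b}. g j)"
    by (rule sum.inter_filter[symmetric]) simp
  also have "{j \<in> {..<c}. j < b} = {..<b}" using assms by auto
  finally show ?thesis .
qed

lemma dilate_A:
  fixes dd :: dims and m :: "nat \<Rightarrow> vec" and n a1 a2 :: nat
  assumes dA: "dd AI = dd AO" and da1: "dd AI' = a1" and da2: "dd AO' = a2" and pos: "1 \<le> a2"
    and tp: "\<forall>x\<in>basis dd {AI, AI'}. \<forall>y\<in>basis dd {AI, AI'}.
       (\<Sum>q\<in>basis dd {AO, AO'}. \<Sum>k<n. m k (join {AI, AI'} x q) * cnj (m k (join {AI, AI'} y q))) = id_op x y"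
  shows "\<exists>U. is_unitary (dd(AI' := a2 * n + a1, AO' := a2 * n + a1)) {AI, AI'} {AO, AO'} U \<and>
     (\<forall>ai<dd AI. \<forall>ao<dd AO. \<forall>\<alpha><a1. \<forall>\<beta><a2. \<forall>k<n.
        U ((\<lambda>_. 0)(AO := ao, AO' := \<beta> + a2 * k)) ((\<lambda>_. 0)(AI := ai, AI' := \<alpha> + a2 * n)) =
        m k ((\<lambda>_. 0)(AI := ai, AI' := \<alpha>, AO := ao, AO' := \<beta>))) \<and>
     (\<forall>ai ao \<alpha> j. ai < dd AI \<longrightarrow> \<alpha> < a1 \<longrightarrow> a2 * n \<le> j \<longrightarrow>
        U ((\<lambda>_. 0)(AO := ao, AO' := j)) ((\<lambda>_. 0)(AI := ai, AI' := \<alpha> + a2 * n)) = 0)"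
proof -
  define c where "c = a2 * n + a1"
  define dd' where "dd' = dd(AI' := c, AO' := c)"
  define I where "I = basis dd' {AI, AI'}"
  define Ot where "Ot = basis dd' {AO, AO'}"
  define ren where "ren i = (\<lambda>_. 0 :: nat)(AO := i AI, AO' := i AI')" for i :: bidx
  define A where "A = {i \<in> I. a2 * n \<le> i AI'}"
  define V where "V q i = m (q AO' div a2) ((\<lambda>_. 0)(AI := i AI, AI' := i AI' - a2 * n, AO := q AO, AO' := q AO' mod a2))" for q i :: bidx
  have bij: "bij_betw ren I Ot"
  proof (rule bij_betwI[where g = "\<lambda>q. (\<lambda>_. 0 :: nat)(AI := q AO, AI' := q AO')"])
    show "ren \<in> I \<rightarrow> Ot" using dA by (auto simp: I_def Ot_def ren_def basis_def dd'_def)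
    show "(\<lambda>q. (\<lambda>_. 0 :: nat)(AI := q AO, AI' := q AO')) \<in> Ot \<rightarrow> I" using dA by (auto simp: I_def Ot_def basis_def dd'_def)
    show "(\<lambda>_. 0)(AI := ren x AO, AI' := ren x AO') = x" if "x \<in> I" for x
      using that by (auto simp: I_def ren_def basis_def party_fun_eq_iff)
    show "ren ((\<lambda>_. 0)(AI := y AO, AI' := y AO')) = y" if "y \<in> Ot" for y
      using that by (auto simp: Ot_def ren_def basis_def party_fun_eq_iff)
  qed
  have Bo: "Ot - ren ` A = {q \<in> Ot. q AO' < a2 * n}"
  proof (intro set_eqI iffI)
    fix q assume q: "q \<in> Ot - ren ` A"
    show "q \<in> {q \<in> Ot. q AO' < a2 * n}"
    proof (rule ccontr)
      assume "q \<notin> {q \<in> Ot. q AO' < a2 * n}"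
      then have ge: "a2 * n \<le> q AO'" using q by auto
      have "(\<lambda>_. 0 :: nat)(AI := q AO, AI' := q AO') \<in> A"
        using q ge dA by (auto simp: A_def I_def Ot_def basis_def dd'_def)
      moreover have "ren ((\<lambda>_. 0 :: nat)(AI := q AO, AI' := q AO')) = q"
        using q by (auto simp: Ot_def ren_def basis_def party_fun_eq_iff)
      ultimately show False using q by force
    qed
  next
    fix q assume "q \<in> {q \<in> Ot. q AO' < a2 * n}"
    then show "q \<in> Ot - ren ` A" by (auto simp: A_def ren_def)
  qed
  define xa where "xa i = (\<lambda>_. 0 :: nat)(AI := i AI, AI' := i AI' - a2 * n)" for i :: bidx
  have xa_in: "xa i \<in> basis dd {AI, AI'}" if "i \<in> A" for i
    using that da1 by (auto simp: xa_def A_def I_def basis_def dd'_def c_def)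
  have xa_inj: "xa i1 = xa i2 \<longleftrightarrow> i1 = i2" if "i1 \<in> A" "i2 \<in> A" for i1 i2
    using that by (auto simp: xa_def A_def I_def basis_def party_fun_eq_iff)
  have sumY: "(\<Sum>q\<in>basis dd' {AO, AO'}. f q) = (\<Sum>q\<in>basis dd {AO}. \<Sum>j<c. f (q(AO' := j)))" for f
  proof -
    have "(\<Sum>q\<in>basis dd' {AO, AO'}. f q) = (\<Sum>q\<in>basis dd' ({AO, AO'} - {AO'}). \<Sum>j<dd' AO'. f (q(AO' := j)))"
      by (rule basis_fun_upd_split) simp
    also have "basis dd' ({AO, AO'} - {AO'}) = basis dd {AO}" by (auto simp: basis_def dd'_def)
    also have "dd' AO' = c" by (simp add: dd'_def)
    finally show ?thesis .
  qed
  have sumY2: "(\<Sum>q\<in>basis dd {AO, AO'}. f q) = (\<Sum>q\<in>basis dd {AO}. \<Sum>j<a2. f (q(AO' := j)))" for f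
  proof -
    have "(\<Sum>q\<in>basis dd {AO, AO'}. f q) = (\<Sum>q\<in>basis dd ({AO, AO'} - {AO'}). \<Sum>j<dd AO'. f (q(AO' := j)))"
      by (rule basis_fun_upd_split) simp
    also have "{AO, AO'} - {AO'} = {AO}" by auto
    also note da2
    finally show ?thesis .
  qed
  have iso: "\<forall>i1\<in>A. \<forall>i2\<in>A. (\<Sum>q\<in>Ot - ren ` A. cnj (V q i1) * V q i2) = (if i1 = i2 then 1 else 0)"
  proof (intro ballI)
    fix i1 i2 assume i1: "i1 \<in> A" and i2: "i2 \<in> A"
    have "(\<Sum>q\<in>Ot - ren ` A. cnj (V q i1) * V q i2) = (\<Sum>q\<in>Ot. if q AO' < a2 * n then cnj (V q i1) * V q i2 else 0)"
      unfolding Bo by (simp add: sum.inter_filter[symmetric] Int_def Ot_def)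
    also have "\<dots> = (\<Sum>q\<in>basis dd {AO}. \<Sum>j<c. if j < a2 * n then cnj (V (q(AO' := j)) i1) * V (q(AO' := j)) i2 else 0)"
      unfolding Ot_def sumY by simp
    also have "\<dots> = (\<Sum>q\<in>basis dd {AO}. \<Sum>k<n. \<Sum>j<a2. cnj (V (q(AO' := j + a2 * k)) i1) * V (q(AO' := j + a2 * k)) i2)"
      by (rule sum.cong[OF refl]) (simp add: sum_lt_block c_def sum_mult_blocks)
    also have "\<dots> = (\<Sum>q\<in>basis dd {AO}. \<Sum>j<a2. \<Sum>k<n. cnj (m k (join {AI, AI'} (xa i1) (q(AO' := j)))) * m k (join {AI, AI'} (xa i2) (q(AO' := j))))"
    proof (rule sum.cong[OF refl])
      fix q assume q: "q \<in> basis dd {AO}"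
      have e: "V (q(AO' := j + a2 * k)) i = m k (join {AI, AI'} (xa i) (q(AO' := j)))" if "j < a2" for i j k
      proof -
        have "(j + a2 * k) div a2 = k" "(j + a2 * k) mod a2 = j" using that by auto
        moreover have "(\<lambda>_. 0)(AI := i AI, AI' := i AI' - a2 * n, AO := q AO, AO' := j) = join {AI, AI'} (xa i) (q(AO' := j))"
          using q by (auto simp: party_fun_eq_iff join_def xa_def basis_def)
        ultimately show ?thesis unfolding V_def by simp
      qed
      show "(\<Sum>k<n. \<Sum>j<a2. cnj (V (q(AO' := j + a2 * k)) i1) * V (q(AO' := j + a2 * k)) i2) =
            (\<Sum>j<a2. \<Sum>k<n. cnj (m k (join {AI, AI'} (xa i1) (q(AO' := j)))) * m k (join {AI, AI'} (xa i2) (q(AO' := j))))"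
        by (subst sum.swap) (intro sum.cong refl, simp add: e)
    qed
    also have "\<dots> = cnj (\<Sum>q\<in>basis dd {AO, AO'}. \<Sum>k<n. m k (join {AI, AI'} (xa i1) q) * cnj (m k (join {AI, AI'} (xa i2) q)))"
      unfolding sumY2 cnj_sum by (simp add: mult.commute)
    also have "\<dots> = cnj (id_op (xa i1) (xa i2))" using tp xa_in[OF i1] xa_in[OF i2] by simp
    also have "\<dots> = (if i1 = i2 then 1 else 0)" using xa_inj[OF i1 i2] by (simp add: id_op_def)
    finally show "(\<Sum>q\<in>Ot - ren ` A. cnj (V q i1) * V q i2) = (if i1 = i2 then 1 else 0)" .
  qed
  interpret h: halmos I Ot ren A V
  proof (unfold_locales)
    show "finite I" by (simp add: I_def)
    show "finite Ot" by (simp add: Ot_def)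
    show "bij_betw ren I Ot" by (rule bij)
    show "A \<subseteq> I" by (auto simp: A_def)
    show "\<forall>a1\<in>A. \<forall>a2\<in>A. (\<Sum>q\<in>Ot - ren ` A. cnj (V q a1) * V q a2) = (if a1 = a2 then 1 else 0)" by (rule iso)
  qed
  define U where "U = h.H"
  have unit: "is_unitary dd' {AI, AI'} {AO, AO'} U"
    unfolding is_unitary_def id_op_def U_def using h.col_orth h.row_orth by (simp add: I_def Ot_def)
  have key: "U ((\<lambda>_. 0)(AO := ao, AO' := \<beta> + a2 * k)) ((\<lambda>_. 0)(AI := ai, AI' := \<alpha> + a2 * n)) =
        m k ((\<lambda>_. 0)(AI := ai, AI' := \<alpha>, AO := ao, AO' := \<beta>))"
    if "ai < dd AI" "ao < dd AO" "\<alpha> < a1" "\<beta> < a2" "k < n" for ai ao \<alpha> \<beta> k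
  proof -
    have kn: "a2 * k + a2 \<le> a2 * n" using \<open>k < n\<close> by (metis Suc_leI mult_Suc_right mult_le_mono2 add.commute)
    have iA: "(\<lambda>_. 0)(AI := ai, AI' := \<alpha> + a2 * n) \<in> A"
      using that da1 by (auto simp: A_def I_def basis_def dd'_def c_def)
    have qB: "(\<lambda>_. 0)(AO := ao, AO' := \<beta> + a2 * k) \<in> h.Bo"
      unfolding h.Bo_def Bo using that kn dA by (auto simp: Ot_def basis_def dd'_def c_def)
    have "(\<beta> + a2 * k) div a2 = k" "(\<beta> + a2 * k) mod a2 = \<beta>" using that by auto
    then show ?thesis unfolding U_def h.H_def using iA qB by (simp add: V_def)
  qed
  have zero: "U ((\<lambda>_. 0)(AO := ao, AO' := j)) ((\<lambda>_. 0)(AI := ai, AI' := \<alpha> + a2 * n)) = 0"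
    if "ai < dd AI" "\<alpha> < a1" "a2 * n \<le> j" for ai ao \<alpha> j
  proof -
    have iA: "(\<lambda>_. 0)(AI := ai, AI' := \<alpha> + a2 * n) \<in> A"
      using that da1 by (auto simp: A_def I_def basis_def dd'_def c_def)
    have qB: "(\<lambda>_. 0)(AO := ao, AO' := j) \<notin> h.Bo"
      unfolding h.Bo_def Bo using that by auto
    show ?thesis unfolding U_def h.H_def using iA qB by simp
  qed
  show ?thesis using unit key zero unfolding dd'_def c_def by blast
qed

lemma dilate_B:
  fixes dd :: dims and m :: "nat \<Rightarrow> vec" and n a1 a2 :: nat
  assumes dA: "dd BI = dd BO" and da1: "dd BI' = a1" and da2: "dd BO' = a2" and pos: "1 \<le> a2"
    and tp: "\<forall>x\<in>basis dd {BI, BI'}. \<forall>y\<in>basis dd {BI, BI'}.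
       (\<Sum>q\<in>basis dd {BO, BO'}. \<Sum>k<n. m k (join {BI, BI'} x q) * cnj (m k (join {BI, BI'} y q))) = id_op x y"
  shows "\<exists>U. is_unitary (dd(BI' := a2 * n + a1, BO' := a2 * n + a1)) {BI, BI'} {BO, BO'} U \<and>
     (\<forall>ai<dd BI. \<forall>ao<dd BO. \<forall>\<alpha><a1. \<forall>\<beta><a2. \<forall>k<n.
        U ((\<lambda>_. 0)(BO := ao, BO' := \<beta> + a2 * k)) ((\<lambda>_. 0)(BI := ai, BI' := \<alpha> + a2 * n)) =
        m k ((\<lambda>_. 0)(BI := ai, BI' := \<alpha>, BO := ao, BO' := \<beta>))) \<and>
     (\<forall>ai ao \<alpha> j. ai < dd BI \<longrightarrow> \<alpha> < a1 \<longrightarrow> a2 * n \<le> j \<longrightarrow>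
        U ((\<lambda>_. 0)(BO := ao, BO' := j)) ((\<lambda>_. 0)(BI := ai, BI' := \<alpha> + a2 * n)) = 0)"
proof -
  define c where "c = a2 * n + a1"
  define dd' where "dd' = dd(BI' := c, BO' := c)"
  define I where "I = basis dd' {BI, BI'}"
  define Ot where "Ot = basis dd' {BO, BO'}"
  define ren where "ren i = (\<lambda>_. 0 :: nat)(BO := i BI, BO' := i BI')" for i :: bidx
  define A where "A = {i \<in> I. a2 * n \<le> i BI'}"
  define V where "V q i = m (q BO' div a2) ((\<lambda>_. 0)(BI := i BI, BI' := i BI' - a2 * n, BO := q BO, BO' := q BO' mod a2))" for q i :: bidx
  have bij: "bij_betw ren I Ot"
  proof (rule bij_betwI[where g = "\<lambda>q. (\<lambda>_. 0 :: nat)(BI := q BO, BI' := q BO')"])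
    show "ren \<in> I \<rightarrow> Ot" using dA by (auto simp: I_def Ot_def ren_def basis_def dd'_def)
    show "(\<lambda>q. (\<lambda>_. 0 :: nat)(BI := q BO, BI' := q BO')) \<in> Ot \<rightarrow> I" using dA by (auto simp: I_def Ot_def basis_def dd'_def)
    show "(\<lambda>_. 0)(BI := ren x BO, BI' := ren x BO') = x" if "x \<in> I" for x
      using that by (auto simp: I_def ren_def basis_def party_fun_eq_iff)
    show "ren ((\<lambda>_. 0)(BI := y BO, BI' := y BO')) = y" if "y \<in> Ot" for y
      using that by (auto simp: Ot_def ren_def basis_def party_fun_eq_iff)
  qed
  have Bo: "Ot - ren ` A = {q \<in> Ot. q BO' < a2 * n}"
  proof (intro set_eqI iffI)
    fix q assume q: "q \<in> Ot - ren ` A"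
    show "q \<in> {q \<in> Ot. q BO' < a2 * n}"
    proof (rule ccontr)
      assume "q \<notin> {q \<in> Ot. q BO' < a2 * n}"
      then have ge: "a2 * n \<le> q BO'" using q by auto
      have "(\<lambda>_. 0 :: nat)(BI := q BO, BI' := q BO') \<in> A"
        using q ge dA by (auto simp: A_def I_def Ot_def basis_def dd'_def)
      moreover have "ren ((\<lambda>_. 0 :: nat)(BI := q BO, BI' := q BO')) = q"
        using q by (auto simp: Ot_def ren_def basis_def party_fun_eq_iff)
      ultimately show False using q by force
    qed
  next
    fix q assume "q \<in> {q \<in> Ot. q BO' < a2 * n}"
    then show "q \<in> Ot - ren ` A" by (auto simp: A_def ren_def)
  qed
  define xa where "xa i = (\<lambda>_. 0 :: nat)(BI := i BI, BI' := i BI' - a2 * n)" for i :: bidx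
  have xa_in: "xa i \<in> basis dd {BI, BI'}" if "i \<in> A" for i
    using that da1 by (auto simp: xa_def A_def I_def basis_def dd'_def c_def)
  have xa_inj: "xa i1 = xa i2 \<longleftrightarrow> i1 = i2" if "i1 \<in> A" "i2 \<in> A" for i1 i2
    using that by (auto simp: xa_def A_def I_def basis_def party_fun_eq_iff)
  have sumY: "(\<Sum>q\<in>basis dd' {BO, BO'}. f q) = (\<Sum>q\<in>basis dd {BO}. \<Sum>j<c. f (q(BO' := j)))" for f
  proof -
    have "(\<Sum>q\<in>basis dd' {BO, BO'}. f q) = (\<Sum>q\<in>basis dd' ({BO, BO'} - {BO'}). \<Sum>j<dd' BO'. f (q(BO' := j)))"
      by (rule basis_fun_upd_split) simp
    also have "basis dd' ({BO, BO'} - {BO'}) = basis dd {BO}" by (auto simp: basis_def dd'_def)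
    also have "dd' BO' = c" by (simp add: dd'_def)
    finally show ?thesis .
  qed
  have sumY2: "(\<Sum>q\<in>basis dd {BO, BO'}. f q) = (\<Sum>q\<in>basis dd {BO}. \<Sum>j<a2. f (q(BO' := j)))" for f
  proof -
    have "(\<Sum>q\<in>basis dd {BO, BO'}. f q) = (\<Sum>q\<in>basis dd ({BO, BO'} - {BO'}). \<Sum>j<dd BO'. f (q(BO' := j)))"
      by (rule basis_fun_upd_split) simp
    also have "{BO, BO'} - {BO'} = {BO}" by auto
    also note da2
    finally show ?thesis .
  qed
  have iso: "\<forall>i1\<in>A. \<forall>i2\<in>A. (\<Sum>q\<in>Ot - ren ` A. cnj (V q i1) * V q i2) = (if i1 = i2 then 1 else 0)"
  proof (intro ballI)
    fix i1 i2 assume i1: "i1 \<in> A" and i2: "i2 \<in> A"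
    have "(\<Sum>q\<in>Ot - ren ` A. cnj (V q i1) * V q i2) = (\<Sum>q\<in>Ot. if q BO' < a2 * n then cnj (V q i1) * V q i2 else 0)"
      unfolding Bo by (simp add: sum.inter_filter[symmetric] Int_def Ot_def)
    also have "\<dots> = (\<Sum>q\<in>basis dd {BO}. \<Sum>j<c. if j < a2 * n then cnj (V (q(BO' := j)) i1) * V (q(BO' := j)) i2 else 0)"
      unfolding Ot_def sumY by simp
    also have "\<dots> = (\<Sum>q\<in>basis dd {BO}. \<Sum>k<n. \<Sum>j<a2. cnj (V (q(BO' := j + a2 * k)) i1) * V (q(BO' := j + a2 * k)) i2)"
      by (rule sum.cong[OF refl]) (simp add: sum_lt_block c_def sum_mult_blocks)
    also have "\<dots> = (\<Sum>q\<in>basis dd {BO}. \<Sum>j<a2. \<Sum>k<n. cnj (m k (join {BI, BI'} (xa i1) (q(BO' := j)))) * m k (join {BI, BI'} (xa i2) (q(BO' := j))))"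
    proof (rule sum.cong[OF refl])
      fix q assume q: "q \<in> basis dd {BO}"
      have e: "V (q(BO' := j + a2 * k)) i = m k (join {BI, BI'} (xa i) (q(BO' := j)))" if "j < a2" for i j k
      proof -
        have "(j + a2 * k) div a2 = k" "(j + a2 * k) mod a2 = j" using that by auto
        moreover have "(\<lambda>_. 0)(BI := i BI, BI' := i BI' - a2 * n, BO := q BO, BO' := j) = join {BI, BI'} (xa i) (q(BO' := j))"
          using q by (auto simp: party_fun_eq_iff join_def xa_def basis_def)
        ultimately show ?thesis unfolding V_def by simp
      qed
      show "(\<Sum>k<n. \<Sum>j<a2. cnj (V (q(BO' := j + a2 * k)) i1) * V (q(BO' := j + a2 * k)) i2) =
            (\<Sum>j<a2. \<Sum>k<n. cnj (m k (join {BI, BI'} (xa i1) (q(BO' := j)))) * m k (join {BI, BI'} (xa i2) (q(BO' := j))))"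
        by (subst sum.swap) (intro sum.cong refl, simp add: e)
    qed
    also have "\<dots> = cnj (\<Sum>q\<in>basis dd {BO, BO'}. \<Sum>k<n. m k (join {BI, BI'} (xa i1) q) * cnj (m k (join {BI, BI'} (xa i2) q)))"
      unfolding sumY2 cnj_sum by (simp add: mult.commute)
    also have "\<dots> = cnj (id_op (xa i1) (xa i2))" using tp xa_in[OF i1] xa_in[OF i2] by simp
    also have "\<dots> = (if i1 = i2 then 1 else 0)" using xa_inj[OF i1 i2] by (simp add: id_op_def)
    finally show "(\<Sum>q\<in>Ot - ren ` A. cnj (V q i1) * V q i2) = (if i1 = i2 then 1 else 0)" .
  qed
  interpret h: halmos I Ot ren A V
  proof (unfold_locales)
    show "finite I" by (simp add: I_def)
    show "finite Ot" by (simp add: Ot_def)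
    show "bij_betw ren I Ot" by (rule bij)
    show "A \<subseteq> I" by (auto simp: A_def)
    show "\<forall>a1\<in>A. \<forall>a2\<in>A. (\<Sum>q\<in>Ot - ren ` A. cnj (V q a1) * V q a2) = (if a1 = a2 then 1 else 0)" by (rule iso)
  qed
  define U where "U = h.H"
  have unit: "is_unitary dd' {BI, BI'} {BO, BO'} U"
    unfolding is_unitary_def id_op_def U_def using h.col_orth h.row_orth by (simp add: I_def Ot_def)
  have key: "U ((\<lambda>_. 0)(BO := ao, BO' := \<beta> + a2 * k)) ((\<lambda>_. 0)(BI := ai, BI' := \<alpha> + a2 * n)) =
        m k ((\<lambda>_. 0)(BI := ai, BI' := \<alpha>, BO := ao, BO' := \<beta>))"
    if "ai < dd BI" "ao < dd BO" "\<alpha> < a1" "\<beta> < a2" "k < n" for ai ao \<alpha> \<beta> k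
  proof -
    have kn: "a2 * k + a2 \<le> a2 * n" using \<open>k < n\<close> by (metis Suc_leI mult_Suc_right mult_le_mono2 add.commute)
    have iA: "(\<lambda>_. 0)(BI := ai, BI' := \<alpha> + a2 * n) \<in> A"
      using that da1 by (auto simp: A_def I_def basis_def dd'_def c_def)
    have qB: "(\<lambda>_. 0)(BO := ao, BO' := \<beta> + a2 * k) \<in> h.Bo"
      unfolding h.Bo_def Bo using that kn dA by (auto simp: Ot_def basis_def dd'_def c_def)
    have "(\<beta> + a2 * k) div a2 = k" "(\<beta> + a2 * k) mod a2 = \<beta>" using that by auto
    then show ?thesis unfolding U_def h.H_def using iA qB by (simp add: V_def)
  qed
  have zero: "U ((\<lambda>_. 0)(BO := ao, BO' := j)) ((\<lambda>_. 0)(BI := ai, BI' := \<alpha> + a2 * n)) = 0"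
    if "ai < dd BI" "\<alpha> < a1" "a2 * n \<le> j" for ai ao \<alpha> j
  proof -
    have iA: "(\<lambda>_. 0)(BI := ai, BI' := \<alpha> + a2 * n) \<in> A"
      using that da1 by (auto simp: A_def I_def basis_def dd'_def c_def)
    have qB: "(\<lambda>_. 0)(BO := ao, BO' := j) \<notin> h.Bo"
      unfolding h.Bo_def Bo using that by auto
    show ?thesis unfolding U_def h.H_def using iA qB by simp
  qed
  show ?thesis using unit key zero unfolding dd'_def c_def by blast
qed

lemma basis_eq: "(\<forall>l\<in>S. d1 l = d2 l) \<Longrightarrow> basis d1 S = basis d2 S"
  by (auto simp: basis_def)

lemma unitary_basis_eq:
  "basis d1 X = basis d2 X \<Longrightarrow> basis d1 Y = basis d2 Y \<Longrightarrow> is_unitary d1 X Y U = is_unitary d2 X Y U"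
  by (simp add: is_unitary_def)

lemma sumY3: "(\<Sum>q\<in>basis dd {F, AO', BO'}. f q) = (\<Sum>q\<in>basis dd {F}. \<Sum>j<dd AO'. \<Sum>j'<dd BO'. f (q(AO' := j, BO' := j')))"
proof -
  have "(\<Sum>q\<in>basis dd {F, AO', BO'}. f q) = (\<Sum>q\<in>basis dd ({F, AO', BO'} - {AO'}). \<Sum>j<dd AO'. f (q(AO' := j)))"
    by (rule basis_fun_upd_split) simp
  also have "{F, AO', BO'} - {AO'} = {F, BO'}" by auto
  also have "(\<Sum>q\<in>basis dd {F, BO'}. \<Sum>j<dd AO'. f (q(AO' := j))) =
      (\<Sum>q\<in>basis dd ({F, BO'} - {BO'}). \<Sum>j'<dd BO'. \<Sum>j<dd AO'. f (q(BO' := j', AO' := j)))"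
    by (rule basis_fun_upd_split) simp
  also have "{F, BO'} - {BO'} = {F}" by auto
  also have "(\<Sum>q\<in>basis dd {F}. \<Sum>j'<dd BO'. \<Sum>j<dd AO'. f (q(BO' := j', AO' := j))) =
      (\<Sum>q\<in>basis dd {F}. \<Sum>j<dd AO'. \<Sum>j'<dd BO'. f (q(AO' := j, BO' := j')))"
    by (rule sum.cong[OF refl], subst sum.swap) (simp add: fun_upd_twist)
  finally show ?thesis .
qed

lemma tp_from_unitary_choi:
  assumes X0: "is_unitary dd {P, AI', BI'} {F, AO', BO'} X0"
    and eq: "\<forall>a\<in>basis dd {P, F, AI', AO', BI', BO'}. \<forall>b\<in>basis dd {P, F, AI', AO', BI', BO'}.
       v a * cnj (v b) = dket {P, AI', BI'} {F, AO', BO'} X0 a * cnj (dket {P, AI', BI'} {F, AO', BO'} X0 b)"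
    and x: "x \<in> basis dd {P, AI', BI'}" and y: "y \<in> basis dd {P, AI', BI'}"
  shows "(\<Sum>q\<in>basis dd {F, AO', BO'}. v (join {P, AI', BI'} x q) * cnj (v (join {P, AI', BI'} y q))) = id_op x y"
proof -
  have "(\<Sum>q\<in>basis dd {F, AO', BO'}. v (join {P, AI', BI'} x q) * cnj (v (join {P, AI', BI'} y q)))
      = (\<Sum>q\<in>basis dd {F, AO', BO'}. X0 q x * cnj (X0 q y))"
  proof (rule sum.cong[OF refl])
    fix q assume q: "q \<in> basis dd {F, AO', BO'}"
    have jx: "join {P, AI', BI'} x q \<in> basis dd {P, F, AI', AO', BI', BO'}"
      using join_in_basis[OF x q] by (simp add: insert_commute)
    have jy: "join {P, AI', BI'} y q \<in> basis dd {P, F, AI', AO', BI', BO'}"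
      using join_in_basis[OF y q] by (simp add: insert_commute)
    have "restr {F, AO', BO'} (join {P, AI', BI'} x q) = q" "restr {P, AI', BI'} (join {P, AI', BI'} x q) = x"
      "restr {F, AO', BO'} (join {P, AI', BI'} y q) = q" "restr {P, AI', BI'} (join {P, AI', BI'} y q) = y"
      using x y q by (auto simp: party_fun_eq_iff restr_def join_def basis_iff)
    then show "v (join {P, AI', BI'} x q) * cnj (v (join {P, AI', BI'} y q)) = X0 q x * cnj (X0 q y)"
      using eq jx jy unfolding dket_def by simp
  qed
  also have "\<dots> = cnj (\<Sum>q\<in>basis dd {F, AO', BO'}. cnj (X0 q x) * X0 q y)"
    unfolding cnj_sum by (simp add: mult.commute)
  also have "\<dots> = cnj (id_op x y)" using X0 x y unfolding is_unitary_def by simp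
  also have "\<dots> = id_op x y" by (simp add: id_op_def)
  finally show ?thesis .
qed

lemma tp_dilation:
  fixes d :: dims and u :: vec and mA mB :: "nat \<Rightarrow> vec"
  assumes dpos: "\<forall>l\<in>mainS. 1 \<le> d l" and dA: "d AI = d AO" and dB: "d BI = d BO" and dP: "d P = d F"
    and pure: "is_pure d (proj u)"
    and pos: "1 \<le> a1" "1 \<le> a2" "1 \<le> b1" "1 \<le> b2"
    and tpA: "\<forall>x\<in>basis (anc_dims d a1 a2 b1 b2) {AI, AI'}. \<forall>y\<in>basis (anc_dims d a1 a2 b1 b2) {AI, AI'}.
       (\<Sum>q\<in>basis (anc_dims d a1 a2 b1 b2) {AO, AO'}. \<Sum>k<nA. mA k (join {AI, AI'} x q) * cnj (mA k (join {AI, AI'} y q))) = id_op x y"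
    and tpB: "\<forall>x\<in>basis (anc_dims d a1 a2 b1 b2) {BI, BI'}. \<forall>y\<in>basis (anc_dims d a1 a2 b1 b2) {BI, BI'}.
       (\<Sum>q\<in>basis (anc_dims d a1 a2 b1 b2) {BO, BO'}. \<Sum>k<nB. mB k (join {BI, BI'} x q) * cnj (mB k (join {BI, BI'} y q))) = id_op x y"
    and x: "x \<in> basis (anc_dims d a1 a2 b1 b2) {P, AI', BI'}" and y: "y \<in> basis (anc_dims d a1 a2 b1 b2) {P, AI', BI'}"
  shows "(\<Sum>s\<in>basis (anc_dims d a1 a2 b1 b2) {F, AO', BO'}. \<Sum>k<nA. \<Sum>l<nB.
      contr (anc_dims d a1 a2 b1 b2) u (mA k) (mB l) (join {P, AI', BI'} x s) *
      cnj (contr (anc_dims d a1 a2 b1 b2) u (mA k) (mB l) (join {P, AI', BI'} y s))) = id_op x y"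
proof -
  define da where "da = anc_dims d a1 a2 b1 b2"
  define cA where "cA = a2 * nA + a1"
  define cB where "cB = b2 * nB + b1"
  define dc where "dc = anc_dims d cA cA cB cB"
  have daAI: "da AI = da AO" "da AI' = a1" "da AO' = a2" using dA by (simp_all add: da_def anc_dims_def)
  have daBI: "da BI = da BO" "da BI' = b1" "da BO' = b2" using dB by (simp_all add: da_def anc_dims_def)
  obtain UA where UA: "is_unitary (da(AI' := cA, AO' := cA)) {AI, AI'} {AO, AO'} UA"
    and keyA: "\<forall>ai<da AI. \<forall>ao<da AO. \<forall>\<alpha><a1. \<forall>\<beta><a2. \<forall>k<nA.
        UA ((\<lambda>_. 0)(AO := ao, AO' := \<beta> + a2 * k)) ((\<lambda>_. 0)(AI := ai, AI' := \<alpha> + a2 * nA)) =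
        mA k ((\<lambda>_. 0)(AI := ai, AI' := \<alpha>, AO := ao, AO' := \<beta>))"
    and zeroA: "\<forall>ai ao \<alpha> j. ai < da AI \<longrightarrow> \<alpha> < a1 \<longrightarrow> a2 * nA \<le> j \<longrightarrow>
        UA ((\<lambda>_. 0)(AO := ao, AO' := j)) ((\<lambda>_. 0)(AI := ai, AI' := \<alpha> + a2 * nA)) = 0"
    using dilate_A[OF daAI pos(2) tpA[folded da_def]] unfolding cA_def by blast
  obtain UB where UB: "is_unitary (da(BI' := cB, BO' := cB)) {BI, BI'} {BO, BO'} UB"
    and keyB: "\<forall>ai<da BI. \<forall>ao<da BO. \<forall>\<alpha><b1. \<forall>\<beta><b2. \<forall>k<nB.
        UB ((\<lambda>_. 0)(BO := ao, BO' := \<beta> + b2 * k)) ((\<lambda>_. 0)(BI := ai, BI' := \<alpha> + b2 * nB)) =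
        mB k ((\<lambda>_. 0)(BI := ai, BI' := \<alpha>, BO := ao, BO' := \<beta>))"
    and zeroB: "\<forall>ai ao \<alpha> j. ai < da BI \<longrightarrow> \<alpha> < b1 \<longrightarrow> b2 * nB \<le> j \<longrightarrow>
        UB ((\<lambda>_. 0)(BO := ao, BO' := j)) ((\<lambda>_. 0)(BI := ai, BI' := \<alpha> + b2 * nB)) = 0"
    using dilate_B[OF daBI pos(4) tpB[folded da_def]] unfolding cB_def by blast
  have e1: "basis dc {AI, AI'} = basis (da(AI' := cA, AO' := cA)) {AI, AI'}"
    by (rule basis_eq) (simp add: dc_def da_def anc_dims_def)
  have e2: "basis dc {AO, AO'} = basis (da(AI' := cA, AO' := cA)) {AO, AO'}"
    by (rule basis_eq) (simp add: dc_def da_def anc_dims_def)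
  have e3: "basis dc {BI, BI'} = basis (da(BI' := cB, BO' := cB)) {BI, BI'}"
    by (rule basis_eq) (simp add: dc_def da_def anc_dims_def)
  have e4: "basis dc {BO, BO'} = basis (da(BI' := cB, BO' := cB)) {BO, BO'}"
    by (rule basis_eq) (simp add: dc_def da_def anc_dims_def)
  have UA': "is_unitary dc {AI, AI'} {AO, AO'} UA" using UA unitary_basis_eq[OF e1 e2] by simp
  have UB': "is_unitary dc {BI, BI'} {BO, BO'} UB" using UB unitary_basis_eq[OF e3 e4] by simp
  have conds: "1 \<le> cA \<and> 1 \<le> cA \<and> 1 \<le> cB \<and> 1 \<le> cB \<and>
        d AI * cA = d AO * cA \<and> d BI * cB = d BO * cB \<and> d P * cA * cB = d F * cA * cB"
    using pos dA dB dP by (simp add: cA_def cB_def)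
  have XYe: "{P, AI', BI'} \<union> {F, AO', BO'} = {P, F, AI', AO', BI', BO'}" by auto
  have "is_unitary_choi dc {P, AI', BI'} {F, AO', BO'}
            (link_out dc (proj u) (proj (dket {AI, AI'} {AO, AO'} UA)) (proj (dket {BI, BI'} {BO, BO'} UB)))"
    using pure[unfolded is_pure_def, rule_format, OF conds, of UA UB] UA' UB' unfolding dc_def by blast
  then obtain X0 where X0: "is_unitary dc {P, AI', BI'} {F, AO', BO'} X0"
    and X0e: "\<forall>a\<in>basis dc {P, F, AI', AO', BI', BO'}. \<forall>b\<in>basis dc {P, F, AI', AO', BI', BO'}.
       link_out dc (proj u) (proj (dket {AI, AI'} {AO, AO'} UA)) (proj (dket {BI, BI'} {BO, BO'} UB)) a b =
       dket {P, AI', BI'} {F, AO', BO'} X0 a * cnj (dket {P, AI', BI'} {F, AO', BO'} X0 b)"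
    unfolding unitary_choi_iff XYe by blast
  define Vc where "Vc = contr dc u (dket {AI, AI'} {AO, AO'} UA) (dket {BI, BI'} {BO, BO'} UB)"
  have TPc: "(\<Sum>q\<in>basis dc {F, AO', BO'}. Vc (join {P, AI', BI'} x' q) * cnj (Vc (join {P, AI', BI'} y' q))) = id_op x' y'"
    if "x' \<in> basis dc {P, AI', BI'}" "y' \<in> basis dc {P, AI', BI'}" for x' y'
  proof -
    have eqV: "\<forall>a\<in>basis dc {P, F, AI', AO', BI', BO'}. \<forall>b\<in>basis dc {P, F, AI', AO', BI', BO'}.
       Vc a * cnj (Vc b) = dket {P, AI', BI'} {F, AO', BO'} X0 a * cnj (dket {P, AI', BI'} {F, AO', BO'} X0 b)"
    proof (intro ballI)
      fix a b assume a: "a \<in> basis dc {P, F, AI', AO', BI', BO'}" and b: "b \<in> basis dc {P, F, AI', AO', BI', BO'}"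
      show "Vc a * cnj (Vc b) = dket {P, AI', BI'} {F, AO', BO'} X0 a * cnj (dket {P, AI', BI'} {F, AO', BO'} X0 b)"
        using X0e a b link_out_pure[OF a b, of u UA UB] unfolding Vc_def by simp
    qed
    show ?thesis by (rule tp_from_unitary_choi[OF X0 eqV that])
  qed
  define ex where "ex x' = x'(AI' := x' AI' + a2 * nA, BI' := x' BI' + b2 * nB)" for x' :: bidx
  define Z where "Z = {AI, AO, BI, BO}"
  have bZ: "basis dc Z = basis da Z" unfolding Z_def by (rule basis_eq) (simp add: dc_def da_def anc_dims_def)
  have zlt: "z AI < da AI" "z AO < da AO" "z BI < da BI" "z BO < da BO" if "z \<in> basis da Z" for z
    using that by (auto simp: Z_def basis_def)
  have xlt: "x' AI' < a1" "x' BI' < b1" if "x' \<in> basis da {P, AI', BI'}" for x'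
    using that by (auto simp: basis_def da_def anc_dims_def)
  have key: "Vc (join {P, AI', BI'} (ex x') (q(AO' := \<beta> + a2 * k, BO' := \<beta>' + b2 * l))) =
      contr da u (mA k) (mB l) (join {P, AI', BI'} x' (q(AO' := \<beta>, BO' := \<beta>')))"
    if x': "x' \<in> basis da {P, AI', BI'}" and b: "\<beta> < a2" "\<beta>' < b2" and kl: "k < nA" "l < nB" for x' q \<beta> \<beta>' k l
    unfolding Vc_def contr_def Z_def[symmetric] bZ
  proof (rule sum.cong[OF refl])
    fix z assume z: "z \<in> basis da Z"
    define p where "p = join {P, AI', BI'} (ex x') (q(AO' := \<beta> + a2 * k, BO' := \<beta>' + b2 * l))"
    define p' where "p' = join {P, AI', BI'} x' (q(AO' := \<beta>, BO' := \<beta>'))"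
    have m: "restr mainS (join Z z p) = restr mainS (join Z z p')"
      by (simp add: party_fun_eq_iff p_def p'_def restr_def join_def mainS_def Z_def ex_def)
    have a: "dket {AI, AI'} {AO, AO'} UA (restr {AI, AI', AO, AO'} (join Z z p)) = mA k (restr {AI, AI', AO, AO'} (join Z z p'))"
    proof -
      have "restr {AO, AO'} (restr {AI, AI', AO, AO'} (join Z z p)) = (\<lambda>_. 0)(AO := z AO, AO' := \<beta> + a2 * k)"
        "restr {AI, AI'} (restr {AI, AI', AO, AO'} (join Z z p)) = (\<lambda>_. 0)(AI := z AI, AI' := x' AI' + a2 * nA)"
        "restr {AI, AI', AO, AO'} (join Z z p') = (\<lambda>_. 0)(AI := z AI, AI' := x' AI', AO := z AO, AO' := \<beta>)"
        by (simp_all add: party_fun_eq_iff p_def p'_def restr_def join_def Z_def ex_def)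
      then show ?thesis unfolding dket_def using keyA zlt[OF z] xlt[OF x'] b kl by simp
    qed
    have bb: "dket {BI, BI'} {BO, BO'} UB (restr {BI, BI', BO, BO'} (join Z z p)) = mB l (restr {BI, BI', BO, BO'} (join Z z p'))"
    proof -
      have "restr {BO, BO'} (restr {BI, BI', BO, BO'} (join Z z p)) = (\<lambda>_. 0)(BO := z BO, BO' := \<beta>' + b2 * l)"
        "restr {BI, BI'} (restr {BI, BI', BO, BO'} (join Z z p)) = (\<lambda>_. 0)(BI := z BI, BI' := x' BI' + b2 * nB)"
        "restr {BI, BI', BO, BO'} (join Z z p') = (\<lambda>_. 0)(BI := z BI, BI' := x' BI', BO := z BO, BO' := \<beta>')"
        by (simp_all add: party_fun_eq_iff p_def p'_def restr_def join_def Z_def ex_def)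
      then show ?thesis unfolding dket_def using keyB zlt[OF z] xlt[OF x'] b kl by simp
    qed
    show "u (restr mainS (join Z z p)) * dket {AI, AI'} {AO, AO'} UA (restr {AI, AI', AO, AO'} (join Z z p)) *
          dket {BI, BI'} {BO, BO'} UB (restr {BI, BI', BO, BO'} (join Z z p)) =
          u (restr mainS (join Z z p')) * mA k (restr {AI, AI', AO, AO'} (join Z z p')) * mB l (restr {BI, BI', BO, BO'} (join Z z p'))"
      using m a bb by simp
  qed
  have zero: "Vc (join {P, AI', BI'} (ex x') (q(AO' := j, BO' := j'))) = 0"
    if x': "x' \<in> basis da {P, AI', BI'}" and j: "\<not> (j < a2 * nA \<and> j' < b2 * nB)" for x' q j j'
    unfolding Vc_def contr_def Z_def[symmetric] bZ
  proof (rule sum.neutral, rule ballI)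
    fix z assume z: "z \<in> basis da Z"
    define p where "p = join {P, AI', BI'} (ex x') (q(AO' := j, BO' := j'))"
    have "restr {AO, AO'} (restr {AI, AI', AO, AO'} (join Z z p)) = (\<lambda>_. 0)(AO := z AO, AO' := j)"
        "restr {AI, AI'} (restr {AI, AI', AO, AO'} (join Z z p)) = (\<lambda>_. 0)(AI := z AI, AI' := x' AI' + a2 * nA)"
        "restr {BO, BO'} (restr {BI, BI', BO, BO'} (join Z z p)) = (\<lambda>_. 0)(BO := z BO, BO' := j')"
        "restr {BI, BI'} (restr {BI, BI', BO, BO'} (join Z z p)) = (\<lambda>_. 0)(BI := z BI, BI' := x' BI' + b2 * nB)"
      by (simp_all add: party_fun_eq_iff p_def restr_def join_def Z_def ex_def)
    then have "dket {AI, AI'} {AO, AO'} UA (restr {AI, AI', AO, AO'} (join Z z p)) = 0 \<or>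
               dket {BI, BI'} {BO, BO'} UB (restr {BI, BI', BO, BO'} (join Z z p)) = 0"
      unfolding dket_def using zeroA zeroB zlt[OF z] xlt[OF x'] j by auto
    then show "u (restr mainS (join Z z p)) * dket {AI, AI'} {AO, AO'} UA (restr {AI, AI', AO, AO'} (join Z z p)) *
          dket {BI, BI'} {BO, BO'} UB (restr {BI, BI', BO, BO'} (join Z z p)) = 0" by auto
  qed
  have xa: "x \<in> basis da {P, AI', BI'}" and ya: "y \<in> basis da {P, AI', BI'}" using x y by (simp_all add: da_def)
  have exin: "ex x' \<in> basis dc {P, AI', BI'}" if "x' \<in> basis da {P, AI', BI'}" for x'
    using that by (auto simp: basis_def ex_def dc_def da_def anc_dims_def cA_def cB_def)
  have exid: "id_op (ex x) (ex y) = id_op x y"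
  proof -
    have "ex x = ex y \<Longrightarrow> x = y" unfolding ex_def by (auto simp: party_fun_eq_iff)
    then show ?thesis by (auto simp: id_op_def)
  qed
  define G where "G q j j' = Vc (join {P, AI', BI'} (ex x) (q(AO' := j, BO' := j'))) * cnj (Vc (join {P, AI', BI'} (ex y) (q(AO' := j, BO' := j'))))" for q j j'
  define H where "H k l q \<beta> \<beta>' = contr da u (mA k) (mB l) (join {P, AI', BI'} x (q(AO' := \<beta>, BO' := \<beta>'))) *
      cnj (contr da u (mA k) (mB l) (join {P, AI', BI'} y (q(AO' := \<beta>, BO' := \<beta>'))))" for k l q \<beta> \<beta>'
  have bF: "basis dc {F} = basis da {F}" by (rule basis_eq) (simp add: dc_def da_def anc_dims_def)
  have "id_op x y = id_op (ex x) (ex y)" using exid by simp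
  also have "\<dots> = (\<Sum>q\<in>basis dc {F, AO', BO'}. Vc (join {P, AI', BI'} (ex x) q) * cnj (Vc (join {P, AI', BI'} (ex y) q)))"
    by (rule TPc[OF exin[OF xa] exin[OF ya], symmetric])
  also have "\<dots> = (\<Sum>q\<in>basis da {F}. \<Sum>j<cA. \<Sum>j'<cB. G q j j')"
    unfolding sumY3 bF G_def by (simp add: dc_def anc_dims_def)
  also have "\<dots> = (\<Sum>q\<in>basis da {F}. \<Sum>j<cA. if j < a2 * nA then (\<Sum>j'<cB. if j' < b2 * nB then G q j j' else 0) else 0)"
    unfolding sum_if_const[symmetric] G_def using zero[OF xa] zero[OF ya] by (intro sum.cong refl) auto
  also have "\<dots> = (\<Sum>q\<in>basis da {F}. \<Sum>j<a2 * nA. \<Sum>j'<b2 * nB. G q j j')"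
    by (simp add: sum_lt_block cA_def cB_def)
  also have "\<dots> = (\<Sum>q\<in>basis da {F}. \<Sum>k<nA. \<Sum>\<beta><a2. \<Sum>l<nB. \<Sum>\<beta>'<b2. G q (\<beta> + a2 * k) (\<beta>' + b2 * l))"
    by (simp add: sum_mult_blocks)
  also have "\<dots> = (\<Sum>q\<in>basis da {F}. \<Sum>k<nA. \<Sum>\<beta><a2. \<Sum>l<nB. \<Sum>\<beta>'<b2. H k l q \<beta> \<beta>')"
    unfolding G_def H_def using key[OF xa] key[OF ya] by (intro sum.cong refl) simp
  also have "\<dots> = (\<Sum>q\<in>basis da {F}. \<Sum>\<beta><a2. \<Sum>\<beta>'<b2. \<Sum>k<nA. \<Sum>l<nB. H k l q \<beta> \<beta>')"
  proof (rule sum.cong[OF refl])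
    fix q
    have "(\<Sum>k<nA. \<Sum>\<beta><a2. \<Sum>l<nB. \<Sum>\<beta>'<b2. H k l q \<beta> \<beta>') = (\<Sum>\<beta><a2. \<Sum>k<nA. \<Sum>l<nB. \<Sum>\<beta>'<b2. H k l q \<beta> \<beta>')"
      by (rule sum.swap)
    also have "\<dots> = (\<Sum>\<beta><a2. \<Sum>k<nA. \<Sum>\<beta>'<b2. \<Sum>l<nB. H k l q \<beta> \<beta>')"
      by (rule sum.cong[OF refl], rule sum.cong[OF refl]) (rule sum.swap)
    also have "\<dots> = (\<Sum>\<beta><a2. \<Sum>\<beta>'<b2. \<Sum>k<nA. \<Sum>l<nB. H k l q \<beta> \<beta>')"
      by (rule sum.cong[OF refl]) (rule sum.swap)
    finally show "(\<Sum>k<nA. \<Sum>\<beta><a2. \<Sum>l<nB. \<Sum>\<beta>'<b2. H k l q \<beta> \<beta>') = (\<Sum>\<beta><a2. \<Sum>\<beta>'<b2. \<Sum>k<nA. \<Sum>l<nB. H k l q \<beta> \<beta>')" .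
  qed
  also have "\<dots> = (\<Sum>s\<in>basis da {F, AO', BO'}. \<Sum>k<nA. \<Sum>l<nB.
      contr da u (mA k) (mB l) (join {P, AI', BI'} x s) * cnj (contr da u (mA k) (mB l) (join {P, AI', BI'} y s)))"
    unfolding sumY3 H_def by (simp add: da_def anc_dims_def)
  finally show ?thesis unfolding da_def by simp
qed

lemma kraus_side:
  assumes cptp: "is_cptp dd X Y \<Phi>" and XY: "X \<inter> Y = {}" and R: "Ref \<notin> X" "Ref \<notin> Y" and ne: "basis dd X \<noteq> {}"
  obtains n :: nat and m where
    "\<forall>a\<in>basis dd (X \<union> Y). \<forall>b\<in>basis dd (X \<union> Y). choi X Y \<Phi> a b = (\<Sum>k\<in>{..<n}. m k a * cnj (m k b))"
    "\<forall>x\<in>basis dd X. \<forall>y\<in>basis dd X. (\<Sum>q\<in>basis dd Y. \<Sum>k<n. m k (join X x q) * cnj (m k (join X y q))) = id_op x y"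
proof -
  obtain n :: nat and m where dec: "\<forall>a\<in>basis dd (X \<union> Y). \<forall>b\<in>basis dd (X \<union> Y). choi X Y \<Phi> a b = (\<Sum>k<n. m k a * cnj (m k b))"
    and tp: "\<forall>x\<in>basis dd X. \<forall>y\<in>basis dd X. (\<Sum>s\<in>basis dd Y. choi X Y \<Phi> (join X x s) (join X y s)) = id_op x y"
    using kraus_of_cptp[OF cptp XY R ne] by blast
  have "\<forall>x\<in>basis dd X. \<forall>y\<in>basis dd X. (\<Sum>q\<in>basis dd Y. \<Sum>k<n. m k (join X x q) * cnj (m k (join X y q))) = id_op x y"
  proof (intro ballI)
    fix x y assume x: "x \<in> basis dd X" and y: "y \<in> basis dd X"
    have "(\<Sum>q\<in>basis dd Y. \<Sum>k<n. m k (join X x q) * cnj (m k (join X y q))) = (\<Sum>s\<in>basis dd Y. choi X Y \<Phi> (join X x s) (join X y s))"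
      using dec join_in_basis[OF x _ XY] join_in_basis[OF y _ XY] by (intro sum.cong refl) simp
    then show "(\<Sum>q\<in>basis dd Y. \<Sum>k<n. m k (join X x q) * cnj (m k (join X y q))) = id_op x y" using tp x y by simp
  qed
  with dec show ?thesis by (rule that)
qed

lemma process_rev:
  assumes dpos: "\<forall>l\<in>mainS. 1 \<le> d l" and dA: "d AI = d AO" and dB: "d BI = d BO" and dP: "d P = d F"
    and purer: "is_pure d (proj u)"
  shows "is_process_matrix d (proj u)"
  unfolding is_process_matrix_def
proof (intro allI impI)
  fix a1 a2 b1 b2 :: nat and \<Phi>x \<Phi>y
  assume pos: "1 \<le> a1 \<and> 1 \<le> a2 \<and> 1 \<le> b1 \<and> 1 \<le> b2"
  assume cp: "is_cptp (anc_dims d a1 a2 b1 b2) {AI, AI'} {AO, AO'} \<Phi>x \<and> is_cptp (anc_dims d a1 a2 b1 b2) {BI, BI'} {BO, BO'} \<Phi>y"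
  define da where "da = anc_dims d a1 a2 b1 b2"
  have cpA: "is_cptp da {AI, AI'} {AO, AO'} \<Phi>x" and cpB: "is_cptp da {BI, BI'} {BO, BO'} \<Phi>y"
    using cp by (simp_all add: da_def)
  have neA: "basis da {AI, AI'} \<noteq> {}" using zero_basis[of "{AI, AI'}" da] dpos pos by (auto simp: da_def anc_dims_def mainS_def)
  have neB: "basis da {BI, BI'} \<noteq> {}" using zero_basis[of "{BI, BI'}" da] dpos pos by (auto simp: da_def anc_dims_def mainS_def)
  obtain nA :: nat and mA where decA: "\<forall>a\<in>basis da ({AI, AI'} \<union> {AO, AO'}). \<forall>b\<in>basis da ({AI, AI'} \<union> {AO, AO'}).
       choi {AI, AI'} {AO, AO'} \<Phi>x a b = (\<Sum>k\<in>{..<nA}. mA k a * cnj (mA k b))"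
    and tpA: "\<forall>x\<in>basis da {AI, AI'}. \<forall>y\<in>basis da {AI, AI'}. (\<Sum>q\<in>basis da {AO, AO'}. \<Sum>k<nA. mA k (join {AI, AI'} x q) * cnj (mA k (join {AI, AI'} y q))) = id_op x y"
    by (rule kraus_side[OF cpA _ _ _ neA]) auto
  obtain nB :: nat and mB where decB: "\<forall>a\<in>basis da ({BI, BI'} \<union> {BO, BO'}). \<forall>b\<in>basis da ({BI, BI'} \<union> {BO, BO'}).
       choi {BI, BI'} {BO, BO'} \<Phi>y a b = (\<Sum>k\<in>{..<nB}. mB k a * cnj (mB k b))"
    and tpB: "\<forall>x\<in>basis da {BI, BI'}. \<forall>y\<in>basis da {BI, BI'}. (\<Sum>q\<in>basis da {BO, BO'}. \<Sum>k<nB. mB k (join {BI, BI'} x q) * cnj (mB k (join {BI, BI'} y q))) = id_op x y"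
    by (rule kraus_side[OF cpB _ _ _ neB]) auto
  have eA: "{AI, AI'} \<union> {AO, AO'} = {AI, AI', AO, AO'}" and eB: "{BI, BI'} \<union> {BO, BO'} = {BI, BI', BO, BO'}"
    and eO: "{P, AI', BI'} \<union> {F, AO', BO'} = {P, F, AI', AO', BI', BO'}" by auto
  define J where "J = link_out da (proj u) (choi {AI, AI'} {AO, AO'} \<Phi>x) (choi {BI, BI'} {BO, BO'} \<Phi>y)"
  define v where "v p = contr da u (mA (fst p)) (mB (snd p))" for p
  have Jdec: "J s t = (\<Sum>k\<in>{..<nA}. \<Sum>l\<in>{..<nB}. contr da u (mA k) (mB l) s * cnj (contr da u (mA k) (mB l) t))"
    if "s \<in> basis da {P, F, AI', AO', BI', BO'}" "t \<in> basis da {P, F, AI', AO', BI', BO'}" for s t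
    unfolding J_def by (rule link_out_kraus[OF that]) (use decA decB eA eB in auto)
  have "is_cptp_choi da {P, AI', BI'} {F, AO', BO'} J"
  proof (rule cptp_choi_from_kraus[where K = "{..<nA} \<times> {..<nB}" and v = v])
    show "\<forall>a\<in>basis da ({P, AI', BI'} \<union> {F, AO', BO'}). \<forall>b\<in>basis da ({P, AI', BI'} \<union> {F, AO', BO'}).
      J a b = (\<Sum>k\<in>{..<nA} \<times> {..<nB}. v k a * cnj (v k b))"
      unfolding eO using Jdec by (simp add: sum.cartesian_product v_def case_prod_beta)
    show "\<forall>x\<in>basis da {P, AI', BI'}. \<forall>y\<in>basis da {P, AI', BI'}.
      (\<Sum>s\<in>basis da {F, AO', BO'}. J (join {P, AI', BI'} x s) (join {P, AI', BI'} y s)) = id_op x y"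
    proof (intro ballI)
      fix x y assume x: "x \<in> basis da {P, AI', BI'}" and y: "y \<in> basis da {P, AI', BI'}"
      have "(\<Sum>s\<in>basis da {F, AO', BO'}. J (join {P, AI', BI'} x s) (join {P, AI', BI'} y s)) =
        (\<Sum>s\<in>basis da {F, AO', BO'}. \<Sum>k<nA. \<Sum>l<nB.
          contr da u (mA k) (mB l) (join {P, AI', BI'} x s) * cnj (contr da u (mA k) (mB l) (join {P, AI', BI'} y s)))"
      proof (rule sum.cong[OF refl])
        fix s assume s: "s \<in> basis da {F, AO', BO'}"
        have "join {P, AI', BI'} x s \<in> basis da {P, F, AI', AO', BI', BO'}" "join {P, AI', BI'} y s \<in> basis da {P, F, AI', AO', BI', BO'}"
          using join_in_basis[OF x s] join_in_basis[OF y s] eO by auto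
        then show "J (join {P, AI', BI'} x s) (join {P, AI', BI'} y s) = (\<Sum>k<nA. \<Sum>l<nB.
          contr da u (mA k) (mB l) (join {P, AI', BI'} x s) * cnj (contr da u (mA k) (mB l) (join {P, AI', BI'} y s)))"
          using Jdec by simp
      qed
      also have "\<dots> = id_op x y"
        using tp_dilation[OF dpos dA dB dP purer _ _ _ _ tpA[unfolded da_def] tpB[unfolded da_def] x[unfolded da_def] y[unfolded da_def]] pos
        unfolding da_def by blast
      finally show "(\<Sum>s\<in>basis da {F, AO', BO'}. J (join {P, AI', BI'} x s) (join {P, AI', BI'} y s)) = id_op x y" .
    qed
  qed auto
  then show "is_cptp_choi (anc_dims d a1 a2 b1 b2) {P, AI', BI'} {F, AO', BO'}
            (link_out (anc_dims d a1 a2 b1 b2) (proj u) (choi {AI, AI'} {AO, AO'} \<Phi>x) (choi {BI, BI'} {BO, BO'} \<Phi>y))"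
    unfolding J_def da_def .
qed

theorem mainTheorem10:
  fixes d :: dims and w :: vec
  assumes "\<forall>l\<in>mainS. 1 \<le> d l"
    and "d AI = d AO" and "d BI = d BO" and "d P = d F"
    and "is_pure_process d (proj w)"
  shows "is_pure_process d (proj (w_rev w))"
proof -
  have pure: "is_pure d (proj w)" using assms(5) by (simp add: is_pure_process_def)
  have purer: "is_pure d (proj (w_rev w))" by (rule pure_rev[OF assms(1-4) pure])
  have "is_process_matrix d (proj (w_rev w))" by (rule process_rev[OF assms(1-4) purer])
  then show ?thesis using purer by (simp add: is_pure_process_def)
qed


end
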